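(* Let $\alpha\in\mathbb{R}$, let $\Theta\in\mathcal{P}'_{J_q,[\alpha,\infty)}$, and let $\Theta=[\Theta_{jk}]_{j,k=1}^2$ be the $q\times q$ block representation of $\Theta$. Then: (a) The function $\det\Theta$ does not vanish identically and the matrix-valued function $\Theta^{-1}$ is meromorphic in $\mathbb{C}\setminus[\alpha,\infty)$. (b) Let $f$ be a $q\times q$ matrix-valued function meromorphic in $\mathbb{C}\setminus[\alpha,\infty)$. Suppose that there is a discrete subset $\mathcal{D}$ of $\mathbb{C}\setminus[\alpha,\infty)$ such that $f$ and $\Theta$ are holomorphic in $\mathbb{C}\setminus([\alpha,\infty)\cup\mathcal{D})$, that $\det\Theta(z)\ne0$ for each $z\in\mathbb{C}\setminus([\alpha,\infty)\cup\mathcal{D})$, and that \[ \begin{pmatrix}f(z)\\ I_q\end{pmatrix}^*\Theta^{-*}(z)\Big(\frac{-J_q}{2\operatorname{Im}z}\Big)\Theta^{-1}(z)\begin{pmatrix}f(z)\\ I_q\end{pmatrix}\succeq 0 \] and \[ \begin{pmatrix}f(z)\\ I_q\end{pmatrix}^*\Theta^{-*}(z)\big(\operatorname{diag}[(z-\alpha)I_q,I_q]\big)^*\Big(\frac{-J_q}{2\operatorname{Im}z}\Big)\big(\operatorname{diag}[(z-\alpha)I_q,I_q]\big)\Theta^{-1}(z)\begin{pmatrix}f(z)\\ I_q\end{pmatrix}\succeq 0 \] for each $z\in\mathbb{C}\setminus(\mathbb{R}\cup\mathcal{D})$. For every such discrete subset $\mathcal{D}$ there exists a pair $\begin{pmatrix}\phi\\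 \psi\end{pmatrix}\in\mathcal{P}_{q,[\alpha,\infty)}$ such that $\phi$ and $\psi$ are holomorphic in $\mathbb{C}\setminus([\alpha,\infty)\cup\mathcal{D})$ and that $\det[\Theta_{21}(z)\phi(z)+\Theta_{22}(z)\psi(z)]\ne0$ and $f(z)=[\Theta_{11}(z)\phi(z)+\Theta_{12}(z)\psi(z)][\Theta_{21}(z)\phi(z)+\Theta_{22}(z)\psi(z)]^{-1}$ hold true for each $z\in\mathbb{C}\setminus([\alpha,\infty)\cup\mathcal{D})$. (c) Let $\begin{pmatrix}\phi\\ \psi\end{pmatrix}\in\mathcal{P}_{q,[\alpha,\infty)}$ be such that $\det(\Theta_{21}\phi+\Theta_{22}\psi)$ does not vanish identically. Then there exists a discrete subset $\mathcal{D}$ of $\mathbb{C}\setminus[\alpha,\infty)$ such that: (I) $\Theta$, $\phi$, $\psi$ are holomorphic in $\mathbb{C}\setminus([\alpha,\infty)\cup\mathcal{D})$; (II) $\det\Theta(z)\ne0$ and $\det[\Theta_{21}(z)\phi(z)+\Theta_{22}(z)\psi(z)]\ne0$ for each $z\in\mathbb{C}\setminus([\alpha,\infty)\cup\mathcal{D})$; (III) the function $f:=(\Theta_{11}\phi+\Theta_{12}\psi)(\Theta_{21}\phi+\Theta_{22}\psi)^{-1}$ is holomorphic in $\mathbb{C}\setminus([\alpha,\infty)\cup\mathcal{D})$, the two inequalities displayed in (b) hold for each $z\in\mathbb{C}\setminus(\mathbb{R}\cup\mathcal{D})$, and $f(z)=[\Theta_{11}(z)\phi(z)+\Theta_{12}(z)\psi(z)][\Theta_{21}(z)\phi(z)+\Theta_{22}(z)\psi(z)]^{-1}$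 for each $z\in\mathbb{C}\setminus([\alpha,\infty)\cup\mathcal{D})$. (d) For each $k\in\{1,2\}$, let $\begin{pmatrix}\phi_k\\ \psi_k\end{pmatrix}\in\mathcal{P}_{q,[\alpha,\infty)}$ be such that $\det(\Theta_{21}\phi_k+\Theta_{22}\psi_k)$ does not vanish identically. Then $\langle\begin{pmatrix}\phi_1\\ \psi_1\end{pmatrix}\rangle=\langle\begin{pmatrix}\phi_2\\ \psi_2\end{pmatrix}\rangle$ if and only if $(\Theta_{11}\phi_1+\Theta_{12}\psi_1)(\Theta_{21}\phi_1+\Theta_{22}\psi_1)^{-1}=(\Theta_{11}\phi_2+\Theta_{12}\psi_2)(\Theta_{21}\phi_2+\Theta_{22}\psi_2)^{-1}$.
   Context: $J_q:=\begin{bmatrix}0_{q\times q}&-iI_q\\ iI_q&0_{q\times q}\end{bmatrix}$, $I_q$ the $q\times q$ identity, $A^{-*}:=(A^{-1})^*$, and $A\succeq0$ means $A$ nonnegative Hermitian; $A\preceq B$ means $B-A\succeq0$. $\mathcal{P}_{J_q,[\alpha,\infty)}$ is the set of all $2q\times2q$ matrix-valued functions $\Theta$ meromorphic in $\mathbb{C}\setminus[\alpha,\infty)$ for which there is a discrete subset $\mathcal{D}$ of $\mathbb{C}\setminus[\alpha,\infty)$ such that $\Theta$ is holomorphic in $\mathbb{C}\setminus([\alpha,\infty)\cup\mathcal{D})$, $\Theta(z)J_q\Theta^*(z)\preceq J_q$ for $z$ in the open upper half-plane minus $\mathcal{D}$, and $\Theta(x)J_q\Theta^*(x)=J_q$ for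 $x\in(-\infty,\alpha)\setminus\mathcal{D}$. With $P_\alpha(z):=\operatorname{diag}((z-\alpha)I_q,I_q)$, $\mathcal{P}'_{J_q,[\alpha,\infty)}$ is the set of all $\Theta\in\mathcal{P}_{J_q,[\alpha,\infty)}$ with $P_\alpha\Theta P_\alpha^{-1}\in\mathcal{P}_{J_q,[\alpha,\infty)}$. $\mathcal{P}_{q,[\alpha,\infty)}$ (the $q\times q$ Stieltjes pairs) is the set of pairs $\begin{pmatrix}\phi\\ \psi\end{pmatrix}$ of $q\times q$ matrix-valued functions meromorphic in $\mathbb{C}\setminus[\alpha,\infty)$ for which there is a discrete $\mathcal{D}\subseteq\mathbb{C}\setminus[\alpha,\infty)$ with: $\phi,\psi$ holomorphic in $\mathbb{C}\setminus([\alpha,\infty)\cup\mathcal{D})$; $\operatorname{rank}\begin{pmatrix}\phi(z)\\ \psi(z)\end{pmatrix}=q$ there; and $\begin{pmatrix}\phi(z)\\ \psi(z)\end{pmatrix}^*\frac{-J_q}{2\operatorname{Im}z}\begin{pmatrix}\phi(z)\\ \psi(z)\end{pmatrix}\succeq0$ and $\begin{pmatrix}(z-\alpha)\phi(z)\\ \psi(z)\end{pmatrix}^*\frac{-J_q}{2\operatorname{Im}z}\begin{pmatrix}(z-\alpha)\phi(z)\\ \psi(z)\end{pmatrix}\succeq0$ for $z\in\mathbb{C}\setminus(\mathbb{R}\cup\mathcal{D})$. Two such pairs are equivalent if there are a $q\times q$ matrix-valued $g$ meromorphic in $\mathbb{C}\setminus[\alpha,\infty)$ and a discrete $\mathcal{D}$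 such that all functions are holomorphic in $\mathbb{C}\setminus([\alpha,\infty)\cup\mathcal{D})$, $\det g(z)\ne0$ and $\phi_2=\phi_1g$, $\psi_2=\psi_1g$ there; $\langle\cdot\rangle$ denotes the equivalence class. *)

theory Defs
  imports "HOL-Analysis.Analysis" "HOL-Complex_Analysis.Complex_Analysis"
begin

definition dom_alpha :: "real \<Rightarrow> complex set" where
  "dom_alpha \<alpha> = - (complex_of_real ` {\<alpha>..})"

definition discrete_in :: "complex set \<Rightarrow> complex set \<Rightarrow> bool" where
  "discrete_in D G \<longleftrightarrow> D \<subseteq> G \<and> D sparse_in G"

definition mholo :: "(complex \<Rightarrow> complex^'n^'m) \<Rightarrow> complex set \<Rightarrow> bool" where
  "mholo F S \<longleftrightarrow> (\<forall>i j. (\<lambda>z. F z $ i $ j) holomorphic_on S)"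

definition mmero :: "(complex \<Rightarrow> complex^'n^'m) \<Rightarrow> complex set \<Rightarrow> bool" where
  "mmero F S \<longleftrightarrow> (\<forall>i j. (\<lambda>z. F z $ i $ j) meromorphic_on S)"

definition madj :: "complex^'n^'m \<Rightarrow> complex^'m^'n" where
  "madj A = (\<chi> i j. cnj (A $ j $ i))"

definition smat :: "complex \<Rightarrow> complex^'n^'m \<Rightarrow> complex^'n^'m" where
  "smat c A = (\<chi> i j. c * A $ i $ j)"

definition psd :: "complex^'n^'n \<Rightarrow> bool" where
  "psd A \<longleftrightarrow> (\<forall>i j. A $ i $ j = cnj (A $ j $ i)) \<and>
     (\<forall>v. 0 \<le> Re (\<Sum>i\<in>UNIV. \<Sum>j\<in>UNIV. cnj (v $ i) * A $ i $ j * v $ j))"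

text \<open>2q x 2q matrices are indexed by 'q + 'q (Inl = first block, Inr = second block).\<close>
definition Jmat :: "complex^('q::finite+'q)^('q::finite+'q)" where
  "Jmat = (\<chi> i j. case (i, j) of
      (Inl a, Inr b) \<Rightarrow> (if a = b then - \<i> else 0)
    | (Inr a, Inl b) \<Rightarrow> (if a = b then \<i> else 0)
    | _ \<Rightarrow> 0)"

definition Palpha :: "real \<Rightarrow> complex \<Rightarrow> complex^('q::finite+'q)^('q::finite+'q)" where
  "Palpha \<alpha> z = (\<chi> i j. if i = j then (case i of Inl _ \<Rightarrow> z - complex_of_real \<alpha> | Inr _ \<Rightarrow> 1) else 0)"

definition stack :: "complex^'n^'q \<Rightarrow> complex^'n^'q \<Rightarrow> complex^'n^('q::finite+'q)" where
  "stack a b = (\<chi> i j. case i of Inl k \<Rightarrow> a $ k $ j | Inr k \<Rightarrow> b $ k $ j)"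

definition b11 :: "complex^('q::finite+'q)^('q::finite+'q) \<Rightarrow> complex^'q^'q" where
  "b11 A = (\<chi> i j. A $ Inl i $ Inl j)"
definition b12 :: "complex^('q::finite+'q)^('q::finite+'q) \<Rightarrow> complex^'q^'q" where
  "b12 A = (\<chi> i j. A $ Inl i $ Inr j)"
definition b21 :: "complex^('q::finite+'q)^('q::finite+'q) \<Rightarrow> complex^'q^'q" where
  "b21 A = (\<chi> i j. A $ Inr i $ Inl j)"
definition b22 :: "complex^('q::finite+'q)^('q::finite+'q) \<Rightarrow> complex^'q^'q" where
  "b22 A = (\<chi> i j. A $ Inr i $ Inr j)"

definition PJ :: "real \<Rightarrow> (complex \<Rightarrow> complex^('q::finite+'q)^('q::finite+'q)) \<Rightarrow> bool" where
  "PJ \<alpha> \<Theta> \<longleftrightarrow> mmero \<Theta> (dom_alpha \<alpha>) \<and>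
     (\<exists>D. discrete_in D (dom_alpha \<alpha>) \<and> mholo \<Theta> (dom_alpha \<alpha> - D) \<and>
       (\<forall>z. Im z > 0 \<and> z \<notin> D \<longrightarrow> psd (Jmat - \<Theta> z ** Jmat ** madj (\<Theta> z))) \<and>
       (\<forall>x. x < \<alpha> \<and> complex_of_real x \<notin> D \<longrightarrow>
            \<Theta> (complex_of_real x) ** Jmat ** madj (\<Theta> (complex_of_real x)) = Jmat))"

definition PJ' :: "real \<Rightarrow> (complex \<Rightarrow> complex^('q::finite+'q)^('q::finite+'q)) \<Rightarrow> bool" where
  "PJ' \<alpha> \<Theta> \<longleftrightarrow> PJ \<alpha> \<Theta> \<and> PJ \<alpha> (\<lambda>z. Palpha \<alpha> z ** \<Theta> z ** matrix_inv (Palpha \<alpha> z))"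

definition stieltjes_pair :: "real \<Rightarrow> (complex \<Rightarrow> complex^'q::finite^'q) \<Rightarrow> (complex \<Rightarrow> complex^'q::finite^'q) \<Rightarrow> bool" where
  "stieltjes_pair \<alpha> \<phi> \<psi> \<longleftrightarrow> mmero \<phi> (dom_alpha \<alpha>) \<and> mmero \<psi> (dom_alpha \<alpha>) \<and>
     (\<exists>D. discrete_in D (dom_alpha \<alpha>) \<and> mholo \<phi> (dom_alpha \<alpha> - D) \<and> mholo \<psi> (dom_alpha \<alpha> - D) \<and>
       (\<forall>z\<in>dom_alpha \<alpha> - D. rank (stack (\<phi> z) (\<psi> z)) = CARD('q)) \<and>
       (\<forall>z. z \<notin> \<real> \<and> z \<notin> D \<longrightarrow>
          psd (madj (stack (\<phi> z) (\<psi> z)) ** smat (1 / (2 * complex_of_real (Im z))) (- Jmat)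
               ** stack (\<phi> z) (\<psi> z)) \<and>
          psd (madj (stack (smat (z - complex_of_real \<alpha>) (\<phi> z)) (\<psi> z))
               ** smat (1 / (2 * complex_of_real (Im z))) (- Jmat)
               ** stack (smat (z - complex_of_real \<alpha>) (\<phi> z)) (\<psi> z))))"

definition pair_equiv :: "real \<Rightarrow> (complex \<Rightarrow> complex^'q::finite^'q) \<Rightarrow> (complex \<Rightarrow> complex^'q::finite^'q)
    \<Rightarrow> (complex \<Rightarrow> complex^'q::finite^'q) \<Rightarrow> (complex \<Rightarrow> complex^'q::finite^'q) \<Rightarrow> bool" where
  "pair_equiv \<alpha> \<phi>1 \<psi>1 \<phi>2 \<psi>2 \<longleftrightarrow>
     (\<exists>(g :: complex \<Rightarrow> complex^'q^'q) D. mmero g (dom_alpha \<alpha>) \<and> discrete_in D (dom_alpha \<alpha>) \<and>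
        mholo \<phi>1 (dom_alpha \<alpha> - D) \<and> mholo \<psi>1 (dom_alpha \<alpha> - D) \<and>
        mholo \<phi>2 (dom_alpha \<alpha> - D) \<and> mholo \<psi>2 (dom_alpha \<alpha> - D) \<and> mholo g (dom_alpha \<alpha> - D) \<and>
        (\<forall>z\<in>dom_alpha \<alpha> - D. det (g z) \<noteq> 0 \<and> \<phi>2 z = \<phi>1 z ** g z \<and> \<psi>2 z = \<psi>1 z ** g z))"

definition stieltjes_class :: "real \<Rightarrow> (complex \<Rightarrow> complex^'q::finite^'q) \<Rightarrow> (complex \<Rightarrow> complex^'q::finite^'q)
    \<Rightarrow> ((complex \<Rightarrow> complex^'q::finite^'q) \<times> (complex \<Rightarrow> complex^'q::finite^'q)) set" where
  "stieltjes_class \<alpha> \<phi> \<psi> = {p. stieltjes_pair \<alpha> (fst p) (snd p) \<and> pair_equiv \<alpha> \<phi> \<psi> (fst p) (snd p)}"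

definition vanishes_identically :: "complex set \<Rightarrow> (complex \<Rightarrow> complex) \<Rightarrow> bool" where
  "vanishes_identically G h \<longleftrightarrow> (\<exists>D. discrete_in D G \<and> (\<forall>z\<in>G - D. h z = 0))"

definition mero_eq :: "complex set \<Rightarrow> (complex \<Rightarrow> 'b) \<Rightarrow> (complex \<Rightarrow> 'b) \<Rightarrow> bool" where
  "mero_eq G F1 F2 \<longleftrightarrow> (\<exists>D. discrete_in D G \<and> (\<forall>z\<in>G - D. F1 z = F2 z))"

definition lft_num :: "(complex \<Rightarrow> complex^('q::finite+'q)^('q::finite+'q)) \<Rightarrow> (complex \<Rightarrow> complex^'q::finite^'q)
    \<Rightarrow> (complex \<Rightarrow> complex^'q::finite^'q) \<Rightarrow> complex \<Rightarrow> complex^'q^'q" where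
  "lft_num \<Theta> \<phi> \<psi> z = b11 (\<Theta> z) ** \<phi> z + b12 (\<Theta> z) ** \<psi> z"

definition lft_den :: "(complex \<Rightarrow> complex^('q::finite+'q)^('q::finite+'q)) \<Rightarrow> (complex \<Rightarrow> complex^'q::finite^'q)
    \<Rightarrow> (complex \<Rightarrow> complex^'q::finite^'q) \<Rightarrow> complex \<Rightarrow> complex^'q^'q" where
  "lft_den \<Theta> \<phi> \<psi> z = b21 (\<Theta> z) ** \<phi> z + b22 (\<Theta> z) ** \<psi> z"

definition lft :: "(complex \<Rightarrow> complex^('q::finite+'q)^('q::finite+'q)) \<Rightarrow> (complex \<Rightarrow> complex^'q::finite^'q)
    \<Rightarrow> (complex \<Rightarrow> complex^'q::finite^'q) \<Rightarrow> complex \<Rightarrow> complex^'q^'q" where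
  "lft \<Theta> \<phi> \<psi> z = lft_num \<Theta> \<phi> \<psi> z ** matrix_inv (lft_den \<Theta> \<phi> \<psi> z)"

definition ineq1 :: "(complex \<Rightarrow> complex^('q::finite+'q)^('q::finite+'q)) \<Rightarrow> (complex \<Rightarrow> complex^'q::finite^'q) \<Rightarrow> complex \<Rightarrow> bool" where
  "ineq1 \<Theta> f z \<longleftrightarrow>
     psd (madj (stack (f z) (mat 1)) ** madj (matrix_inv (\<Theta> z))
          ** smat (1 / (2 * complex_of_real (Im z))) (- Jmat)
          ** matrix_inv (\<Theta> z) ** stack (f z) (mat 1))"

definition ineq2 :: "real \<Rightarrow> (complex \<Rightarrow> complex^('q::finite+'q)^('q::finite+'q)) \<Rightarrow> (complex \<Rightarrow> complex^'q::finite^'q) \<Rightarrow> complex \<Rightarrow> bool" where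
  "ineq2 \<alpha> \<Theta> f z \<longleftrightarrow>
     psd (madj (stack (f z) (mat 1)) ** madj (matrix_inv (\<Theta> z)) ** madj (Palpha \<alpha> z)
          ** smat (1 / (2 * complex_of_real (Im z))) (- Jmat)
          ** Palpha \<alpha> z ** matrix_inv (\<Theta> z) ** stack (f z) (mat 1))"

end

theory Submission
  imports Defs
begin



lemma sum_UNIV_plus:
  fixes f :: "('a::finite + 'b::finite) \<Rightarrow> 'c::comm_monoid_add"
  shows "sum f UNIV = sum (\<lambda>i. f (Inl i)) UNIV + sum (\<lambda>i. f (Inr i)) UNIV"
proof -
  have "sum f UNIV = sum f (range Inl \<union> range Inr)" by (simp add: UNIV_sum[symmetric])
  also have "\<dots> = sum f (range Inl) + sum f (range Inr)"
    by (rule sum.union_disjoint) auto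
  also have "\<dots> = sum (\<lambda>i. f (Inl i)) UNIV + sum (\<lambda>i. f (Inr i)) UNIV"
    by (simp add: sum.reindex)
  finally show ?thesis .
qed

lemma dom_alpha_iff: "z \<in> dom_alpha a \<longleftrightarrow> \<not> (Im z = 0 \<and> Re z \<ge> a)"
  unfolding dom_alpha_def by (auto simp: complex_eq_iff image_iff intro!: exI[of _ "Re z"])

lemma ray_eq: "complex_of_real ` {a..} = {z. Im z = 0 \<and> Re z \<ge> a}"
  by (auto simp: complex_eq_iff image_iff intro!: exI[of _ "Re _"])

lemma open_dom_alpha: "open (dom_alpha a)"
proof -
  have "closed {z. Im z = 0 \<and> Re z \<ge> a}"
    by (intro closed_Collect_conj closed_Collect_eq closed_Collect_le continuous_intros)
  thus ?thesis unfolding dom_alpha_def ray_eq by (simp add: open_Compl)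
qed

lemma connected_dom_alpha: "connected (dom_alpha a)"
proof (rule starlike_imp_connected)
  show "starlike (dom_alpha a)"
    unfolding starlike_def
  proof (intro bexI ballI subsetI)
    show "complex_of_real (a - 1) \<in> dom_alpha a" by (simp add: dom_alpha_iff)
    fix x w assume x: "x \<in> dom_alpha a" and w: "w \<in> closed_segment (complex_of_real (a - 1)) x"
    then obtain u where u: "0 \<le> u" "u \<le> 1" "w = (1 - u) *\<^sub>R complex_of_real (a - 1) + u *\<^sub>R x"
      by (auto simp: closed_segment_def)
    have imw: "Im w = u * Im x" and rew: "Re w = (1 - u) * (a - 1) + u * Re x" using u by auto
    show "w \<in> dom_alpha a"
    proof (cases "u = 0")
      case True thus ?thesis using rew by (simp add: dom_alpha_iff)
    next
      case False
      show ?thesis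
      proof (cases "Im x = 0")
        case True
        hence "Re x < a" using x by (auto simp: dom_alpha_iff)
        hence "u * Re x \<le> u * a" using u by (intro mult_left_mono) auto
        moreover have "(1 - u) * (a - 1) \<le> (1 - u) * a" using u by (intro mult_left_mono) auto
        moreover have "(1 - u) * (a - 1) < (1 - u) * a \<or> u * Re x < u * a"
          using u False \<open>Re x < a\<close> by (cases "u = 1") auto
        ultimately have "Re w < a" using rew by (auto simp: algebra_simps)
        thus ?thesis by (simp add: dom_alpha_iff)
      next
        case False
        thus ?thesis using imw \<open>u \<noteq> 0\<close> by (simp add: dom_alpha_iff)
      qed
    qed
  qed
qed




lemma disc_ev: "discrete_in D U \<Longrightarrow> eventually (\<lambda>z. z \<notin> D) (cosparse U)"
  unfolding discrete_in_def by (auto intro: eventually_not_in_cosparse)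

lemma ev_disc: "eventually P (cosparse U) \<Longrightarrow> discrete_in {z\<in>U. \<not> P z} U"
  unfolding discrete_in_def eventually_cosparse by (auto elim: sparse_in_subset2)

lemma vanish_iff:
  assumes "open U"
  shows "vanishes_identically U h \<longleftrightarrow> eventually (\<lambda>z. h z = 0) (cosparse U)"
proof
  assume "vanishes_identically U h"
  then obtain D where D: "discrete_in D U" "\<forall>z\<in>U - D. h z = 0"
    unfolding vanishes_identically_def by blast
  have "eventually (\<lambda>z. z \<notin> D) (cosparse U)" by (rule disc_ev[OF D(1)])
  moreover have "eventually (\<lambda>z. z \<in> U) (cosparse U)" using assms by (intro eventually_in_cosparse) auto
  ultimately show "eventually (\<lambda>z. h z = 0) (cosparse U)"
    by eventually_elim (use D(2) in auto)
next
  assume "eventually (\<lambda>z. h z = 0) (cosparse U)"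
  thus "vanishes_identically U h" unfolding vanishes_identically_def
    by (intro exI[of _ "{z\<in>U. \<not> h z = 0}"]) (auto dest: ev_disc)
qed

lemma mero_eq_iff:
  assumes "open U"
  shows "mero_eq U F G \<longleftrightarrow> eventually (\<lambda>z. F z = G z) (cosparse U)"
proof
  assume "mero_eq U F G"
  then obtain D where D: "discrete_in D U" "\<forall>z\<in>U - D. F z = G z"
    unfolding mero_eq_def by blast
  have "eventually (\<lambda>z. z \<notin> D) (cosparse U)" by (rule disc_ev[OF D(1)])
  moreover have "eventually (\<lambda>z. z \<in> U) (cosparse U)" using assms by (intro eventually_in_cosparse) auto
  ultimately show "eventually (\<lambda>z. F z = G z) (cosparse U)"
    by eventually_elim (use D(2) in auto)
next
  assume "eventually (\<lambda>z. F z = G z) (cosparse U)"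
  thus "mero_eq U F G" unfolding mero_eq_def
    by (intro exI[of _ "{z\<in>U. \<not> F z = G z}"]) (auto dest: ev_disc)
qed

lemma ev_in: "open U \<Longrightarrow> eventually (\<lambda>z. z \<in> U) (cosparse U)"
  by (intro eventually_in_cosparse) auto

lemma madj_madj [simp]: "madj (madj A) = A"
  by (simp add: madj_def vec_eq_iff)
lemma madj_nth [simp]: "madj A $ i $ j = cnj (A $ j $ i)"
  by (simp add: madj_def)
lemma madj_mult: "madj (A ** B) = madj B ** madj A"
  unfolding vec_eq_iff
proof (intro allI)
  fix i j
  show "madj (A ** B) $ i $ j = (madj B ** madj A) $ i $ j"
    unfolding madj_nth matrix_matrix_mult_def vec_lambda_beta cnj_sum complex_cnj_mult
    by (simp add: mult.commute)
qed
lemma herm_iff: "(\<forall>i j. A $ i $ j = cnj (A $ j $ i)) \<longleftrightarrow> madj A = A"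
proof
  assume h: "\<forall>i j. A $ i $ j = cnj (A $ j $ i)"
  show "madj A = A" unfolding vec_eq_iff
  proof (intro allI)
    fix i j show "madj A $ i $ j = A $ i $ j" using h[rule_format, of i j] by simp
  qed
next
  assume h: "madj A = A"
  show "\<forall>i j. A $ i $ j = cnj (A $ j $ i)"
  proof (intro allI)
    fix i j
    have "A $ i $ j = madj A $ i $ j" using h by simp
    thus "A $ i $ j = cnj (A $ j $ i)" by simp
  qed
qed
definition cf :: "complex^'n \<Rightarrow> complex^'n \<Rightarrow> complex" where
  "cf v w = (\<Sum>i\<in>UNIV. cnj (v $ i) * w $ i)"

lemma qform_cf: "(\<Sum>i\<in>UNIV. \<Sum>j\<in>UNIV. cnj (v $ i) * A $ i $ j * v $ j) = cf v (A *v v)"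
  by (simp add: cf_def matrix_vector_mult_def sum_distrib_left mult.assoc)

lemma cf_madj: "cf v (madj g *v w) = cf (g *v v) w"
proof -
  have "cf v (madj g *v w) = (\<Sum>i\<in>UNIV. \<Sum>k\<in>UNIV. cnj (v $ i) * cnj (g $ k $ i) * w $ k)"
    unfolding cf_def matrix_vector_mult_def madj_def by (simp add: sum_distrib_left mult.assoc)
  also have "\<dots> = (\<Sum>k\<in>UNIV. \<Sum>i\<in>UNIV. cnj (v $ i) * cnj (g $ k $ i) * w $ k)"
    by (rule sum.swap)
  also have "\<dots> = cf (g *v v) w"
    unfolding cf_def matrix_vector_mult_def
  proof (intro sum.cong refl)
    fix k
    show "(\<Sum>i\<in>UNIV. cnj (v $ i) * cnj (g $ k $ i) * w $ k) =
          cnj ((\<chi> i. \<Sum>j\<in>UNIV. g $ i $ j * v $ j) $ k) * w $ k"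
      by (simp add: cnj_sum sum_distrib_left sum_distrib_right mult.commute)
  qed
  finally show ?thesis .
qed

lemma psd_iff: "psd A \<longleftrightarrow> madj A = A \<and> (\<forall>v. 0 \<le> Re (cf v (A *v v)))"
  unfolding psd_def herm_iff qform_cf ..

lemma psd_congr:
  fixes g :: "complex^'n^'m" and A :: "complex^'m^'m"
  assumes "psd A"
  shows "psd (madj g ** A ** g)"
  unfolding psd_iff
proof
  show "madj (madj g ** A ** g) = madj g ** A ** g"
    using assms by (simp add: psd_iff madj_mult matrix_mul_assoc)
  show "\<forall>v. 0 \<le> Re (cf v ((madj g ** A ** g) *v v))"
  proof
    fix v
    have "cf v ((madj g ** A ** g) *v v) = cf (g *v v) (A *v (g *v v))"
      by (simp add: matrix_vector_mul_assoc[symmetric] cf_madj)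
    thus "0 \<le> Re (cf v ((madj g ** A ** g) *v v))" using assms by (simp add: psd_iff)
  qed
qed

lemma stack_mult: "stack a b ** c = stack (a ** c) (b ** c)"
  by (simp add: stack_def vec_eq_iff matrix_matrix_mult_def split: sum.splits)
lemma stack_inj: "stack a b = stack c d \<Longrightarrow> a = c \<and> b = d"
proof -
  assume h: "stack a b = stack c d"
  have "a $ i $ j = c $ i $ j \<and> b $ i $ j = d $ i $ j" for i j
    using arg_cong[OF h, of "\<lambda>M. M $ Inl i $ j"] arg_cong[OF h, of "\<lambda>M. M $ Inr i $ j"]
    by (simp add: stack_def)
  thus ?thesis by (simp add: vec_eq_iff)
qed
lemma block_mult:
  "T ** stack a b = stack (b11 T ** a + b12 T ** b) (b21 T ** a + b22 T ** b)"
  unfolding vec_eq_iff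
proof (intro allI)
  fix i j
  show "(T ** stack a b) $ i $ j = stack (b11 T ** a + b12 T ** b) (b21 T ** a + b22 T ** b) $ i $ j"
    by (cases i) (simp_all add: stack_def matrix_matrix_mult_def sum_UNIV_plus b11_def b12_def b21_def b22_def)
qed
lemma Palpha_nth: "Palpha al z $ Inl a $ k = (if k = Inl a then z - complex_of_real al else 0)"
   "Palpha al z $ Inr b $ k = (if k = Inr b then 1 else 0)"
  by (auto simp: Palpha_def)

lemma ifm: "(if P then c else 0) * (d::'a::semiring_0) = (if P then c * d else 0)" by simp

lemma Palpha_stack: "Palpha al z ** stack a b = stack (smat (z - complex_of_real al) a) b"
  unfolding vec_eq_iff
proof (intro allI)
  fix i j
  show "(Palpha al z ** stack a b) $ i $ j = stack (smat (z - complex_of_real al) a) b $ i $ j"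
    by (cases i) (simp_all add: stack_def matrix_matrix_mult_def sum_UNIV_plus Palpha_nth smat_def ifm sum.delta sum.delta')
qed
definition utop :: "complex^'n^('q::finite+'q) \<Rightarrow> complex^'n^'q" where
  "utop M = (\<chi> i j. M $ Inl i $ j)"
definition ubot :: "complex^'n^('q::finite+'q) \<Rightarrow> complex^'n^'q" where
  "ubot M = (\<chi> i j. M $ Inr i $ j)"

lemma stack_utop_ubot: "stack (utop M) (ubot M) = M"
  by (simp add: stack_def utop_def ubot_def vec_eq_iff split: sum.splits)

lemma utop_stack [simp]: "utop (stack a b) = a" and ubot_stack [simp]: "ubot (stack a b) = b"
  by (simp_all add: stack_def utop_def ubot_def vec_eq_iff)

lemma minv:
  fixes A :: "'a::field^'n^'n"
  assumes "det A \<noteq> 0"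
  shows "A ** matrix_inv A = mat 1" "matrix_inv A ** A = mat 1"
proof -
  have "\<exists>A'. A ** A' = mat 1 \<and> A' ** A = mat 1"
    using assms invertible_det_nz[of A] unfolding invertible_def by auto
  from someI_ex[OF this] show "A ** matrix_inv A = mat 1" "matrix_inv A ** A = mat 1"
    unfolding matrix_inv_def by auto
qed

lemma det_nz_of_rinv:
  fixes A :: "'a::field^'n^'n"
  assumes "A ** B = mat 1" shows "det A \<noteq> 0"
  using assms det_mul[of A B] det_I by (metis mult_zero_left one_neq_zero)

lemma minv_unique:
  fixes A :: "'a::field^'n^'n"
  assumes "A ** B = mat 1" shows "matrix_inv A = B"
proof -
  have d: "det A \<noteq> 0" by (rule det_nz_of_rinv[OF assms])
  have "matrix_inv A = matrix_inv A ** (A ** B)" using assms by simp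
  also have "\<dots> = B" by (simp add: matrix_mul_assoc minv[OF d])
  finally show ?thesis .
qed

lemma minv_I [simp]: "matrix_inv (mat 1 :: 'a::field^'n^'n) = mat 1"
  by (rule minv_unique) simp

lemma det_minv: "det (A::'a::field^'n^'n) \<noteq> 0 \<Longrightarrow> det (matrix_inv A) \<noteq> 0"
  using minv(2) det_nz_of_rinv by blast

lemma minv_mult:
  fixes A B :: "'a::field^'n^'n"
  assumes "det A \<noteq> 0" "det B \<noteq> 0"
  shows "matrix_inv (A ** B) = matrix_inv B ** matrix_inv A"
proof (rule minv_unique)
  have "A ** B ** (matrix_inv B ** matrix_inv A) = A ** (B ** matrix_inv B) ** matrix_inv A"
    by (simp add: matrix_mul_assoc)
  thus "A ** B ** (matrix_inv B ** matrix_inv A) = mat 1" by (simp add: minv assms)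
qed

lemma minv_cramer:
  fixes A :: "'a::field^'n^'n"
  assumes "det A \<noteq> 0"
  shows "matrix_inv A $ i $ j = det (\<chi> r s. if s = i then (if r = j then 1 else 0) else A $ r $ s) / det A"
proof -
  define x where "x = (\<chi> k. matrix_inv A $ k $ j)"
  have "A *v x = (\<chi> r. if r = j then 1 else 0)"
    using minv(1)[OF assms]
    by (simp add: x_def vec_eq_iff matrix_vector_mult_def matrix_matrix_mult_def mat_def)

  hence "x = (\<chi> k. det (\<chi> r s. if s = k then (\<chi> r. if r = j then 1 else 0) $ r else A $ r $ s) / det A)"
    using cramer[OF assms] by blast
  moreover have "(\<chi> r s. if s = i then (\<chi> r. if r = j then 1 else 0) $ r else A $ r $ s) =
     (\<chi> r s. if s = i then (if r = j then 1 else (0::'a)) else A $ r $ s)"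
    by (simp add: vec_eq_iff)
  ultimately have "x $ i = det (\<chi> r s. if s = i then (if r = j then 1 else 0) else A $ r $ s) / det A" by simp
  thus ?thesis by (simp add: x_def)
qed




definition man :: "(complex \<Rightarrow> complex^'n^'m) \<Rightarrow> complex set \<Rightarrow> bool" where
  "man F S \<longleftrightarrow> (\<forall>i j. (\<lambda>z. F z $ i $ j) analytic_on S)"

lemma man_const: "man (\<lambda>z. C) S" by (simp add: man_def)

lemma man_add: "man F S \<Longrightarrow> man G S \<Longrightarrow> man (\<lambda>z. F z + G z) S"
  by (simp add: man_def analytic_on_add)

lemma man_mult: "man F S \<Longrightarrow> man G S \<Longrightarrow> man (\<lambda>z. F z ** G z) S"
  unfolding man_def matrix_matrix_mult_def by (auto intro!: analytic_on_sum analytic_on_mult)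

lemma analytic_det: "man F S \<Longrightarrow> (\<lambda>z. det (F z)) analytic_on S"
  unfolding man_def det_def by (auto intro!: analytic_on_sum analytic_on_mult analytic_on_prod)

lemma mmero_const: "mmero (\<lambda>z. C) S" unfolding mmero_def by (intro allI meromorphic_on_const)

lemma mmero_add: "mmero F S \<Longrightarrow> mmero G S \<Longrightarrow> mmero (\<lambda>z. F z + G z) S"
  by (simp add: mmero_def meromorphic_on_add)

lemma mmero_mult: "mmero F S \<Longrightarrow> mmero G S \<Longrightarrow> mmero (\<lambda>z. F z ** G z) S"
  unfolding mmero_def matrix_matrix_mult_def by (auto intro!: meromorphic_on_sum meromorphic_on_mult)

lemma mero_det: "mmero F S \<Longrightarrow> (\<lambda>z. det (F z)) meromorphic_on S"
  unfolding mmero_def det_def by (auto intro!: meromorphic_on_sum meromorphic_on_mult meromorphic_on_prod)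

lemma man_blocks:
  assumes "man F S"
  shows "man (\<lambda>z. b11 (F z)) S" "man (\<lambda>z. b12 (F z)) S" "man (\<lambda>z. b21 (F z)) S" "man (\<lambda>z. b22 (F z)) S"
  using assms by (simp_all add: man_def b11_def b12_def b21_def b22_def)

lemma mmero_blocks:
  assumes "mmero F S"
  shows "mmero (\<lambda>z. b11 (F z)) S" "mmero (\<lambda>z. b12 (F z)) S" "mmero (\<lambda>z. b21 (F z)) S" "mmero (\<lambda>z. b22 (F z)) S"
  using assms by (simp_all add: mmero_def b11_def b12_def b21_def b22_def)

lemma man_utop: "man F S \<Longrightarrow> man (\<lambda>z. utop (F z)) S" and man_ubot: "man F S \<Longrightarrow> man (\<lambda>z. ubot (F z)) S"
  by (simp_all add: man_def utop_def ubot_def)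

lemma mmero_utop: "mmero F S \<Longrightarrow> mmero (\<lambda>z. utop (F z)) S" and mmero_ubot: "mmero F S \<Longrightarrow> mmero (\<lambda>z. ubot (F z)) S"
  by (simp_all add: mmero_def utop_def ubot_def)

lemma man_stack: "man F S \<Longrightarrow> man G S \<Longrightarrow> man (\<lambda>z. stack (F z) (G z)) S"
  unfolding man_def stack_def
proof (intro allI)
  fix i j assume "\<forall>i j. (\<lambda>z. F z $ i $ j) analytic_on S" "\<forall>i j. (\<lambda>z. G z $ i $ j) analytic_on S"
  thus "(\<lambda>z. (\<chi> i j. case i of Inl k \<Rightarrow> F z $ k $ j | Inr k \<Rightarrow> G z $ k $ j) $ i $ j) analytic_on S"
    by (cases i) auto
qed

lemma man_lft_parts:
  assumes "man T S" "man P S" "man Q S"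
  shows "man (lft_num T P Q) S" "man (lft_den T P Q) S"
  unfolding lft_num_def lft_den_def using assms man_blocks
  by (auto intro!: man_add man_mult)

lemma mmero_lft_parts:
  assumes "mmero T S" "mmero P S" "mmero Q S"
  shows "mmero (lft_num T P Q) S" "mmero (lft_den T P Q) S"
  unfolding lft_num_def lft_den_def using assms mmero_blocks
  by (auto intro!: mmero_add mmero_mult)

lemma man_points: "(\<forall>z\<in>S. man F {z}) \<Longrightarrow> man F S"
  unfolding man_def using analytic_on_analytic_at by blast

lemma man_point: "man F S \<Longrightarrow> z \<in> S \<Longrightarrow> man F {z}"
  unfolding man_def using analytic_on_subset by blast

lemma mholo_iff: "open S \<Longrightarrow> mholo F S \<longleftrightarrow> man F S"
  by (simp add: mholo_def man_def analytic_on_open)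

lemma man_imp_mmero: "man F S \<Longrightarrow> mmero F S"
  by (simp add: man_def mmero_def analytic_on_imp_meromorphic_on)

lemma ev_man:
  assumes "mmero F U"
  shows "eventually (\<lambda>z. man F {z}) (cosparse U)"
proof -
  have "\<forall>i j. eventually (\<lambda>z. (\<lambda>w. F w $ i $ j) analytic_on {z}) (cosparse U)"
    using assms unfolding mmero_def by (auto intro: meromorphic_on_imp_analytic_cosparse)
  hence "eventually (\<lambda>z. \<forall>i j. (\<lambda>w. F w $ i $ j) analytic_on {z}) (cosparse U)"
    by (auto intro!: eventually_all_finite)
  thus ?thesis unfolding man_def .
qed

definition cram :: "'a::field^'n^'n \<Rightarrow> 'n \<Rightarrow> 'n \<Rightarrow> 'a" where
  "cram A i j = det (\<chi> r s. if s = i then (if r = j then 1 else 0) else A $ r $ s) / det A"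

lemma analytic_cram_num:
  assumes "man F S"
  shows "(\<lambda>z. det (\<chi> r s. if s = i then (if r = j then 1 else 0) else F z $ r $ s)) analytic_on S"
proof (rule analytic_det)
  show "man (\<lambda>z. \<chi> r s. if s = i then (if r = j then 1 else 0) else F z $ r $ s) S"
    unfolding man_def
  proof (intro allI)
    fix r s
    show "(\<lambda>z. (\<chi> r s. if s = i then (if r = j then 1 else 0) else F z $ r $ s) $ r $ s) analytic_on S"
      using assms unfolding man_def by (cases "s = i") (auto intro: analytic_on_const)
  qed
qed

lemma mero_cram_num:
  assumes "mmero F S"
  shows "(\<lambda>z. det (\<chi> r s. if s = i then (if r = j then 1 else 0) else F z $ r $ s)) meromorphic_on S"
proof (rule mero_det)
  show "mmero (\<lambda>z. \<chi> r s. if s = i then (if r = j then 1 else 0) else F z $ r $ s) S"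
    unfolding mmero_def
  proof (intro allI)
    fix r s
    show "(\<lambda>z. (\<chi> r s. if s = i then (if r = j then 1 else 0) else F z $ r $ s) $ r $ s) meromorphic_on S"
      using assms unfolding mmero_def by (cases "s = i") (auto intro: meromorphic_on_const)
  qed
qed

lemma man_minv:
  assumes "man F {z}" "det (F z) \<noteq> 0"
  shows "man (\<lambda>w. matrix_inv (F w)) {z}"
  unfolding man_def
proof (intro allI)
  fix i j
  let ?c = "\<lambda>w. det (\<chi> r s. if s = i then (if r = j then 1 else 0) else F w $ r $ s) / det (F w)"
  have dan: "(\<lambda>w. det (F w)) analytic_on {z}" using analytic_det[OF assms(1)] .
  have "?c analytic_on {z}"
    using analytic_cram_num[OF assms(1)] dan assms(2) by (intro analytic_on_divide) auto
  then obtain s where s: "open s" "z \<in> s" "?c holomorphic_on s" using analytic_at by blast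
  have "isCont (\<lambda>w. det (F w)) z" using analytic_at_imp_isCont[OF dan] .
  then obtain e where e: "e > 0" "\<And>y. dist z y < e \<Longrightarrow> det (F y) \<noteq> 0"
    using continuous_at_avoid[of z "\<lambda>w. det (F w)" 0] assms(2) by auto
  have "(\<lambda>w. matrix_inv (F w) $ i $ j) holomorphic_on (s \<inter> ball z e)"
  proof (rule holomorphic_transform)
    show "?c holomorphic_on (s \<inter> ball z e)" using s(3) by (rule holomorphic_on_subset) auto
    fix x assume "x \<in> s \<inter> ball z e"
    hence "det (F x) \<noteq> 0" using e by auto
    thus "?c x = matrix_inv (F x) $ i $ j" by (simp add: minv_cramer)
  qed
  thus "(\<lambda>w. matrix_inv (F w) $ i $ j) analytic_on {z}"
    using s e analytic_at by (meson Int_iff centre_in_ball open_Int open_ball)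
qed

lemma mmero_minv:
  assumes "mmero F U" "eventually (\<lambda>z. det (F z) \<noteq> 0) (cosparse U)"
  shows "mmero (\<lambda>w. matrix_inv (F w)) U"
  unfolding mmero_def
proof (intro allI)
  fix i j
  let ?c = "\<lambda>w. det (\<chi> r s. if s = i then (if r = j then 1 else 0) else F w $ r $ s) / det (F w)"
  have "?c meromorphic_on U"
    using mero_cram_num[OF assms(1)] mero_det[OF assms(1)] by (intro meromorphic_on_divide)
  moreover have ev: "eventually (\<lambda>w. ?c w = matrix_inv (F w) $ i $ j) (cosparse U)"
    using assms(2) by eventually_elim (simp add: minv_cramer)
  ultimately show "(\<lambda>w. matrix_inv (F w) $ i $ j) meromorphic_on U"
    using meromorphic_on_cong'[OF ev refl] by simp
qed

lemma nonvanish_ev: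
  assumes "h meromorphic_on U" "open U" "connected U" "\<not> vanishes_identically U h"
  shows "eventually (\<lambda>z. h z \<noteq> 0) (cosparse U)"
  using meromorphic_imp_constant_or_avoid[OF assms(1-3), of 0] assms(4) vanish_iff[OF assms(2)]
  by auto




lemma mmero_stack: "mmero F S \<Longrightarrow> mmero G S \<Longrightarrow> mmero (\<lambda>z. stack (F z) (G z)) S"
  unfolding mmero_def stack_def
proof (intro allI)
  fix i j assume "\<forall>i j. (\<lambda>z. F z $ i $ j) meromorphic_on S" "\<forall>i j. (\<lambda>z. G z $ i $ j) meromorphic_on S"
  thus "(\<lambda>z. (\<chi> i j. case i of Inl k \<Rightarrow> F z $ k $ j | Inr k \<Rightarrow> G z $ k $ j) $ i $ j) meromorphic_on S"
    by (cases i) auto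
qed

lemma Jmat_nth:
  "Jmat $ Inl a $ Inl b = 0" "Jmat $ Inr a $ Inr b = 0"
  "Jmat $ Inl a $ Inr b = (if a = b then - \<i> else 0)" "Jmat $ Inr a $ Inl b = (if a = b then \<i> else 0)"
  by (simp_all add: Jmat_def)

lemma J_sq: "(Jmat :: complex^('q::finite+'q)^('q+'q)) ** Jmat = mat 1"
  unfolding vec_eq_iff
proof (intro allI)
  fix i j :: "'q + 'q"
  show "(Jmat ** Jmat) $ i $ j = mat 1 $ i $ j"
  proof (cases i; cases j)
    fix a b assume "i = Inl a" "j = Inl b"
    thus ?thesis by (simp add: matrix_matrix_mult_def sum_UNIV_plus Jmat_nth mat_def ifm sum.delta)
  next
    fix a b assume "i = Inl a" "j = Inr b"
    thus ?thesis by (simp add: matrix_matrix_mult_def sum_UNIV_plus Jmat_nth mat_def)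
  next
    fix a b assume "i = Inr a" "j = Inl b"
    thus ?thesis by (simp add: matrix_matrix_mult_def sum_UNIV_plus Jmat_nth mat_def)
  next
    fix a b assume "i = Inr a" "j = Inr b"
    thus ?thesis by (simp add: matrix_matrix_mult_def sum_UNIV_plus Jmat_nth mat_def ifm sum.delta)
  qed
qed
lemma det_J: "det (Jmat :: complex^('q::finite+'q)^('q+'q)) \<noteq> 0"
  using det_nz_of_rinv[OF J_sq] .

lemma det_nz_of_J:
  fixes T :: "complex^('q::finite+'q)^('q+'q)"
  assumes "T ** Jmat ** madj T = Jmat"
  shows "det T \<noteq> 0"
proof
  assume "det T = 0"
  hence "det (T ** Jmat ** madj T) = 0" by (simp add: det_mul)
  hence "det (Jmat :: complex^('q::finite+'q)^('q+'q)) = 0" using assms by simp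
  thus False using det_J by blast
qed

lemma part_a:
  fixes \<Theta> :: "complex \<Rightarrow> complex^('q::finite + 'q)^('q + 'q)"
  assumes "PJ \<alpha> \<Theta>"
  shows "eventually (\<lambda>z. det (\<Theta> z) \<noteq> 0) (cosparse (dom_alpha \<alpha>))"
    "\<not> vanishes_identically (dom_alpha \<alpha>) (\<lambda>z. det (\<Theta> z))"
    "mmero (\<lambda>z. matrix_inv (\<Theta> z)) (dom_alpha \<alpha>)"
proof -
  let ?U = "dom_alpha \<alpha>"
  from assms obtain D0 where mero: "mmero \<Theta> ?U" and D0: "discrete_in D0 ?U"
    and real: "\<And>x. x < \<alpha> \<Longrightarrow> complex_of_real x \<notin> D0 \<Longrightarrow>
            \<Theta> (complex_of_real x) ** Jmat ** madj (\<Theta> (complex_of_real x)) = Jmat"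
    using assms unfolding PJ_def by metis
  show nv: "\<not> vanishes_identically ?U (\<lambda>z. det (\<Theta> z))"
  proof
    assume "vanishes_identically ?U (\<lambda>z. det (\<Theta> z))"
    hence "eventually (\<lambda>z. det (\<Theta> z) = 0) (cosparse ?U)" using vanish_iff[OF open_dom_alpha] by auto
    moreover have "eventually (\<lambda>z. z \<notin> D0) (cosparse ?U)" by (rule disc_ev[OF D0])
    ultimately have "eventually (\<lambda>z. det (\<Theta> z) = 0 \<and> z \<notin> D0) (cosparse ?U)" by eventually_elim auto
    hence sp: "{z. \<not> (det (\<Theta> z) = 0 \<and> z \<notin> D0)} sparse_in ?U" by (simp add: eventually_cosparse)
    have cnt: "countable (?U \<inter> {z. \<not> (det (\<Theta> z) = 0 \<and> z \<notin> D0)})"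
      by (rule sparse_imp_countable[OF open_dom_alpha sp])
    have sub: "complex_of_real ` {\<alpha>-1<..<\<alpha>} \<subseteq> ?U \<inter> {z. \<not> (det (\<Theta> z) = 0 \<and> z \<notin> D0)}"
    proof
      fix w assume "w \<in> complex_of_real ` {\<alpha>-1<..<\<alpha>}"
      then obtain x where x: "w = complex_of_real x" "x < \<alpha>" by auto
      have "w \<in> ?U" using x by (simp add: dom_alpha_iff)
      moreover have "\<not> (det (\<Theta> w) = 0 \<and> w \<notin> D0)"
        using det_nz_of_J[OF real[OF x(2)]] x by auto
      ultimately show "w \<in> ?U \<inter> {z. \<not> (det (\<Theta> z) = 0 \<and> z \<notin> D0)}" by blast
    qed
    have "countable (complex_of_real ` {\<alpha>-1<..<\<alpha>})" using countable_subset[OF sub cnt] .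
    hence "countable {\<alpha>-1<..<\<alpha>}" by (rule countable_image_inj_on) (auto simp: inj_on_def)
    thus False using uncountable_open_interval[of "\<alpha>-1" \<alpha>] by simp
  qed
  show ev: "eventually (\<lambda>z. det (\<Theta> z) \<noteq> 0) (cosparse ?U)"
    by (rule nonvanish_ev[OF mero_det[OF mero] open_dom_alpha connected_dom_alpha nv])
  show "mmero (\<lambda>z. matrix_inv (\<Theta> z)) ?U" by (rule mmero_minv[OF mero ev])
qed




lemma row_mult_in_span:
  fixes T :: "'a::field^'p^'m" and M :: "'a^'n^'p"
  shows "row i (T ** M) \<in> vec.span (rows M)"
proof -
  have "row i (T ** M) = (\<Sum>k\<in>UNIV. T $ i $ k *s row k M)"
    by (simp add: vec_eq_iff row_def matrix_matrix_mult_def sum_component)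
  also have "\<dots> \<in> vec.span (rows M)"
    by (intro vec.span_sum vec.span_scale vec.span_base) (auto simp: rows_def)
  finally show ?thesis .
qed

lemma rank_full:
  fixes T :: "'a::field^'p^'p" and M :: "'a^'n^'p"
  assumes "T ** M = N" "cart_basis \<subseteq> rows N"
  shows "rank M = CARD('n)"
proof -
  have "rows N \<subseteq> vec.span (rows M)"
    using row_mult_in_span[of _ T M] assms(1) by (auto simp: rows_def)
  hence "vec.span (rows N) \<subseteq> vec.span (rows M)"
    by (intro vec.span_minimal vec.subspace_span)
  moreover have "vec.span (cart_basis :: ('a^'n) set) \<subseteq> vec.span (rows N)"
    using assms(2) by (rule vec.span_mono)
  ultimately have "vec.span (rows M) = UNIV" by auto
  hence "vec.dim (rows M) = vec.dim (UNIV :: ('a^'n) set)"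
    by (metis vec.dim_span)
  thus ?thesis by (simp add: row_rank_def_gen vec_dim_card card_cart_basis)
qed

lemma cart_basis_stack: "cart_basis \<subseteq> rows (stack F (mat 1 :: complex^'q::finite^'q))"
proof
  fix v :: "complex^'q" assume "v \<in> cart_basis"
  then obtain j where v: "v = axis j 1" by (auto simp: cart_basis_def)
  have "row (Inr j) (stack F (mat 1)) = v"
    by (simp add: v vec_eq_iff row_def stack_def axis_def mat_def)
  thus "v \<in> rows (stack F (mat 1))" unfolding rows_def by blast
qed

lemma psd_eq: "A = B \<Longrightarrow> psd A \<Longrightarrow> psd B" by simp

lemma part_b:
  fixes \<Theta> :: "complex \<Rightarrow> complex^('q::finite + 'q)^('q + 'q)" and f :: "complex \<Rightarrow> complex^'q^'q"
  assumes PJ: "PJ \<alpha> \<Theta>" and mf: "mmero f (dom_alpha \<alpha>)" and D: "discrete_in D (dom_alpha \<alpha>)"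
    and hf: "mholo f (dom_alpha \<alpha> - D)" and hT: "mholo \<Theta> (dom_alpha \<alpha> - D)"
    and dT: "\<forall>z\<in>dom_alpha \<alpha> - D. det (\<Theta> z) \<noteq> 0"
    and ineq: "\<forall>z. z \<notin> \<real> \<and> z \<notin> D \<longrightarrow> ineq1 \<Theta> f z \<and> ineq2 \<alpha> \<Theta> f z"
  shows "\<exists>\<phi> \<psi>. stieltjes_pair \<alpha> \<phi> \<psi> \<and> mholo \<phi> (dom_alpha \<alpha> - D) \<and> mholo \<psi> (dom_alpha \<alpha> - D) \<and>
            (\<forall>z\<in>dom_alpha \<alpha> - D. det (lft_den \<Theta> \<phi> \<psi> z) \<noteq> 0 \<and>
               f z = lft_num \<Theta> \<phi> \<psi> z ** matrix_inv (lft_den \<Theta> \<phi> \<psi> z))"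
proof -
  let ?U = "dom_alpha \<alpha>"
  define S where "S z = matrix_inv (\<Theta> z) ** stack (f z) (mat 1)" for z
  define \<phi> where "\<phi> z = utop (S z)" for z
  define \<psi> where "\<psi> z = ubot (S z)" for z
  have stk: "stack (\<phi> z) (\<psi> z) = S z" for z unfolding \<phi>_def \<psi>_def by (rule stack_utop_ubot)
  have oU: "open (?U - D)"
    using D open_dom_alpha by (intro open_diff_sparse_pts) (auto simp: discrete_in_def)
  have manT: "man \<Theta> (?U - D)" and manf: "man f (?U - D)" using hT hf mholo_iff[OF oU] by auto
  have manS: "man S (?U - D)"
  proof (rule man_points, intro ballI)
    fix z assume z: "z \<in> ?U - D"
    show "man S {z}" unfolding S_def
      by (intro man_mult man_minv man_stack man_const man_point[OF manT z] man_point[OF manf z])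
         (use dT z in auto)
  qed
  have hphi: "mholo \<phi> (?U - D)" and hpsi: "mholo \<psi> (?U - D)"
    unfolding mholo_iff[OF oU] \<phi>_def \<psi>_def using manS by (auto intro: man_utop man_ubot)
  have mS: "mmero S ?U" unfolding S_def
    by (intro mmero_mult mmero_stack mmero_const part_a(3)[OF PJ] mf)
  have mphi: "mmero \<phi> ?U" and mpsi: "mmero \<psi> ?U"
    unfolding \<phi>_def \<psi>_def using mS by (auto intro: mmero_utop mmero_ubot)
  have TS: "\<Theta> z ** S z = stack (f z) (mat 1)" if "z \<in> ?U - D" for z
    using dT that by (simp add: S_def matrix_mul_assoc minv)
  have numden: "lft_num \<Theta> \<phi> \<psi> z = f z \<and> lft_den \<Theta> \<phi> \<psi> z = mat 1" if "z \<in> ?U - D" for z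
  proof -
    have "stack (lft_num \<Theta> \<phi> \<psi> z) (lft_den \<Theta> \<phi> \<psi> z) = stack (f z) (mat 1)"
      using TS[OF that] block_mult[of "\<Theta> z" "\<phi> z" "\<psi> z"] stk[of z]
      by (simp add: lft_num_def lft_den_def)
    thus ?thesis by (rule stack_inj)
  qed
  have pair: "stieltjes_pair \<alpha> \<phi> \<psi>"
    unfolding stieltjes_pair_def
  proof (intro conjI exI[of _ D] mphi mpsi D hphi hpsi ballI allI impI)
    fix z assume z: "z \<in> ?U - D"
    show "rank (stack (\<phi> z) (\<psi> z)) = CARD('q)"
      unfolding stk by (rule rank_full[OF TS[OF z] cart_basis_stack])
  next
    fix z :: complex assume z: "z \<notin> \<real> \<and> z \<notin> D"
    hence i1: "ineq1 \<Theta> f z" and i2: "ineq2 \<alpha> \<Theta> f z" using ineq by auto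
    show "psd (madj (stack (\<phi> z) (\<psi> z)) ** smat (1 / (2 * complex_of_real (Im z))) (- Jmat) ** stack (\<phi> z) (\<psi> z))"
      using i1 unfolding ineq1_def stk S_def by (simp add: madj_mult matrix_mul_assoc)
    have "stack (smat (z - complex_of_real \<alpha>) (\<phi> z)) (\<psi> z) = Palpha \<alpha> z ** S z"
      using Palpha_stack[of \<alpha> z "\<phi> z" "\<psi> z"] stk[of z] by simp
    thus "psd (madj (stack (smat (z - complex_of_real \<alpha>) (\<phi> z)) (\<psi> z)) ** smat (1 / (2 * complex_of_real (Im z))) (- Jmat) **
               stack (smat (z - complex_of_real \<alpha>) (\<phi> z)) (\<psi> z))"
      using i2 unfolding ineq2_def S_def by (simp add: madj_mult matrix_mul_assoc)
  qed
  show ?thesis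
    by (intro exI[of _ \<phi>] exI[of _ \<psi>] conjI pair hphi hpsi ballI) (simp_all add: numden)
qed




lemma psd_via:
  assumes "X = S ** g" "psd (madj S ** H ** S)"
  shows "psd (madj X ** H ** X)"
proof -
  have "madj X ** H ** X = madj g ** (madj S ** H ** S) ** g"
    by (simp add: assms(1) madj_mult matrix_mul_assoc)
  thus ?thesis using psd_congr[OF assms(2), of g] by simp
qed

lemma nonreal_in_dom: "z \<notin> \<real> \<Longrightarrow> z \<in> dom_alpha a"
  by (simp add: dom_alpha_iff complex_is_Real_iff)

lemma pair_data:
  assumes "stieltjes_pair \<alpha> \<phi> \<psi>"
  obtains Dp where "mmero \<phi> (dom_alpha \<alpha>)" "mmero \<psi> (dom_alpha \<alpha>)" "discrete_in Dp (dom_alpha \<alpha>)"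
    "\<And>z. z \<notin> \<real> \<Longrightarrow> z \<notin> Dp \<Longrightarrow>
          psd (madj (stack (\<phi> z) (\<psi> z)) ** smat (1 / (2 * complex_of_real (Im z))) (- Jmat)
               ** stack (\<phi> z) (\<psi> z))"
    "\<And>z. z \<notin> \<real> \<Longrightarrow> z \<notin> Dp \<Longrightarrow>
          psd (madj (stack (smat (z - complex_of_real \<alpha>) (\<phi> z)) (\<psi> z))
               ** smat (1 / (2 * complex_of_real (Im z))) (- Jmat)
               ** stack (smat (z - complex_of_real \<alpha>) (\<phi> z)) (\<psi> z))"
    "mholo \<phi> (dom_alpha \<alpha> - Dp)" "mholo \<psi> (dom_alpha \<alpha> - Dp)"
  using assms unfolding stieltjes_pair_def by metis

lemma PJ_mero: "PJ \<alpha> \<Theta> \<Longrightarrow> mmero \<Theta> (dom_alpha \<alpha>)"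
  unfolding PJ_def by blast

lemma lft_eq: "lft \<Theta> \<phi> \<psi> = (\<lambda>z. lft_num \<Theta> \<phi> \<psi> z ** matrix_inv (lft_den \<Theta> \<phi> \<psi> z))"
  by (simp add: lft_def fun_eq_iff)

lemma key_identity:
  fixes T :: "complex^('q::finite+'q)^('q+'q)"
  assumes "det T \<noteq> 0" "det (b21 T ** a + b22 T ** b) \<noteq> 0"
  shows "matrix_inv T ** stack ((b11 T ** a + b12 T ** b) ** matrix_inv (b21 T ** a + b22 T ** b)) (mat 1)
       = stack a b ** matrix_inv (b21 T ** a + b22 T ** b)"
proof -
  let ?E = "b21 T ** a + b22 T ** b" and ?N = "b11 T ** a + b12 T ** b"
  have "stack (?N ** matrix_inv ?E) (mat 1) = stack (?N ** matrix_inv ?E) (?E ** matrix_inv ?E)"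
    using minv(1)[OF assms(2)] by simp
  also have "\<dots> = T ** stack a b ** matrix_inv ?E" by (simp add: stack_mult block_mult)
  finally have "matrix_inv T ** stack (?N ** matrix_inv ?E) (mat 1) = matrix_inv T ** (T ** stack a b ** matrix_inv ?E)"
    by simp
  also have "\<dots> = stack a b ** matrix_inv ?E" by (simp add: matrix_mul_assoc minv(2)[OF assms(1)])
  finally show ?thesis .
qed

lemma part_c:
  fixes \<Theta> :: "complex \<Rightarrow> complex^('q::finite + 'q)^('q + 'q)"
  assumes PJ: "PJ \<alpha> \<Theta>" and pair: "stieltjes_pair \<alpha> \<phi> \<psi>"
    and nv: "\<not> vanishes_identically (dom_alpha \<alpha>) (\<lambda>z. det (lft_den \<Theta> \<phi> \<psi> z))"
  shows "\<exists>D. discrete_in D (dom_alpha \<alpha>) \<and>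
         mholo \<Theta> (dom_alpha \<alpha> - D) \<and> mholo \<phi> (dom_alpha \<alpha> - D) \<and> mholo \<psi> (dom_alpha \<alpha> - D) \<and>
         (\<forall>z\<in>dom_alpha \<alpha> - D. det (\<Theta> z) \<noteq> 0 \<and> det (lft_den \<Theta> \<phi> \<psi> z) \<noteq> 0) \<and>
         mholo (lft \<Theta> \<phi> \<psi>) (dom_alpha \<alpha> - D) \<and>
         (\<forall>z. z \<notin> \<real> \<and> z \<notin> D \<longrightarrow> ineq1 \<Theta> (lft \<Theta> \<phi> \<psi>) z \<and> ineq2 \<alpha> \<Theta> (lft \<Theta> \<phi> \<psi>) z) \<and>
         (\<forall>z\<in>dom_alpha \<alpha> - D.
            lft \<Theta> \<phi> \<psi> z = lft_num \<Theta> \<phi> \<psi> z ** matrix_inv (lft_den \<Theta> \<phi> \<psi> z))"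
proof -
  let ?U = "dom_alpha \<alpha>"
  obtain Dp where mphi: "mmero \<phi> ?U" and mpsi: "mmero \<psi> ?U" and Dp: "discrete_in Dp ?U"
    and ps1: "\<And>z. z \<notin> \<real> \<Longrightarrow> z \<notin> Dp \<Longrightarrow>
          psd (madj (stack (\<phi> z) (\<psi> z)) ** smat (1 / (2 * complex_of_real (Im z))) (- Jmat)
               ** stack (\<phi> z) (\<psi> z))"
    and ps2: "\<And>z. z \<notin> \<real> \<Longrightarrow> z \<notin> Dp \<Longrightarrow>
          psd (madj (stack (smat (z - complex_of_real \<alpha>) (\<phi> z)) (\<psi> z))
               ** smat (1 / (2 * complex_of_real (Im z))) (- Jmat)
               ** stack (smat (z - complex_of_real \<alpha>) (\<phi> z)) (\<psi> z))"
    using pair_data[OF pair] by metis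
  have mT: "mmero \<Theta> ?U" using PJ_mero[OF PJ] .
  define P where "P z \<longleftrightarrow> z \<in> ?U \<and> z \<notin> Dp \<and> man \<Theta> {z} \<and> man \<phi> {z} \<and> man \<psi> {z} \<and>
      det (\<Theta> z) \<noteq> 0 \<and> det (lft_den \<Theta> \<phi> \<psi> z) \<noteq> 0" for z
  have ev2: "eventually (\<lambda>z. det (lft_den \<Theta> \<phi> \<psi> z) \<noteq> 0) (cosparse ?U)"
    by (rule nonvanish_ev[OF mero_det[OF mmero_lft_parts(2)[OF mT mphi mpsi]] open_dom_alpha connected_dom_alpha nv])
  have evP: "eventually P (cosparse ?U)"
    using ev_in[OF open_dom_alpha] disc_ev[OF Dp] ev_man[OF mT] ev_man[OF mphi] ev_man[OF mpsi]
      part_a(1)[OF PJ] ev2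
    unfolding P_def by (intro eventually_conj) auto
  define D where "D = {z\<in>?U. \<not> P z}"
  have D: "discrete_in D ?U" unfolding D_def by (rule ev_disc[OF evP])
  have PD: "P z" if "z \<in> ?U - D" for z using that by (auto simp: D_def)
  have oU: "open (?U - D)"
    using D open_dom_alpha by (intro open_diff_sparse_pts) (auto simp: discrete_in_def)
  have mz: "man \<Theta> {z}" "man \<phi> {z}" "man \<psi> {z}" if "z \<in> ?U - D" for z
    using PD[OF that] unfolding P_def by auto
  have hT: "mholo \<Theta> (?U - D)" unfolding mholo_iff[OF oU] by (rule man_points) (use mz(1) in blast)
  have hphi: "mholo \<phi> (?U - D)" unfolding mholo_iff[OF oU] by (rule man_points) (use mz(2) in blast)
  have hpsi: "mholo \<psi> (?U - D)" unfolding mholo_iff[OF oU] by (rule man_points) (use mz(3) in blast)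
  have hl: "mholo (lft \<Theta> \<phi> \<psi>) (?U - D)"
    unfolding mholo_iff[OF oU] lft_eq
  proof (rule man_points, intro ballI)
    fix z assume "z \<in> ?U - D"
    hence Pz: "P z" by (rule PD)
    hence m: "man \<Theta> {z}" "man \<phi> {z}" "man \<psi> {z}" and d: "det (lft_den \<Theta> \<phi> \<psi> z) \<noteq> 0"
      by (auto simp: P_def)
    show "man (\<lambda>z. lft_num \<Theta> \<phi> \<psi> z ** matrix_inv (lft_den \<Theta> \<phi> \<psi> z)) {z}"
      by (intro man_mult man_minv man_lft_parts[OF m] d)
  qed
  have ineqs: "ineq1 \<Theta> (lft \<Theta> \<phi> \<psi>) z \<and> ineq2 \<alpha> \<Theta> (lft \<Theta> \<phi> \<psi>) z" if z: "z \<notin> \<real>" "z \<notin> D" for z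
  proof -
    have "z \<in> ?U - D" using z nonreal_in_dom by auto
    hence Pz: "P z" by (rule PD)
    hence zDp: "z \<notin> Dp" and dT: "det (\<Theta> z) \<noteq> 0" and dE: "det (lft_den \<Theta> \<phi> \<psi> z) \<noteq> 0"
      by (auto simp: P_def)
    let ?g = "matrix_inv (lft_den \<Theta> \<phi> \<psi> z)"
    let ?H = "smat (1 / (2 * complex_of_real (Im z))) (- Jmat) :: complex^('q+'q)^('q+'q)"
    have key: "matrix_inv (\<Theta> z) ** stack (lft \<Theta> \<phi> \<psi> z) (mat 1) = stack (\<phi> z) (\<psi> z) ** ?g"
      using key_identity[of "\<Theta> z" "\<phi> z" "\<psi> z"] dT dE
      by (simp add: lft_def lft_num_def lft_den_def)
    have e1: "madj (stack (lft \<Theta> \<phi> \<psi> z) (mat 1)) ** madj (matrix_inv (\<Theta> z)) ** ?H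
          ** matrix_inv (\<Theta> z) ** stack (lft \<Theta> \<phi> \<psi> z) (mat 1)
        = madj (matrix_inv (\<Theta> z) ** stack (lft \<Theta> \<phi> \<psi> z) (mat 1)) ** ?H
          ** (matrix_inv (\<Theta> z) ** stack (lft \<Theta> \<phi> \<psi> z) (mat 1))"
      by (simp add: madj_mult matrix_mul_assoc)
    have "psd (madj (matrix_inv (\<Theta> z) ** stack (lft \<Theta> \<phi> \<psi> z) (mat 1)) ** ?H
          ** (matrix_inv (\<Theta> z) ** stack (lft \<Theta> \<phi> \<psi> z) (mat 1)))"
      by (rule psd_via[OF key ps1[OF z(1) zDp]])
    hence i1: "ineq1 \<Theta> (lft \<Theta> \<phi> \<psi>) z" unfolding ineq1_def e1 .
    have key2: "Palpha \<alpha> z ** matrix_inv (\<Theta> z) ** stack (lft \<Theta> \<phi> \<psi> z) (mat 1)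
        = stack (smat (z - complex_of_real \<alpha>) (\<phi> z)) (\<psi> z) ** ?g"
      using arg_cong[OF key, of "\<lambda>X. Palpha \<alpha> z ** X"]
      by (simp add: matrix_mul_assoc Palpha_stack)
    have e2: "madj (stack (lft \<Theta> \<phi> \<psi> z) (mat 1)) ** madj (matrix_inv (\<Theta> z)) ** madj (Palpha \<alpha> z) ** ?H
          ** Palpha \<alpha> z ** matrix_inv (\<Theta> z) ** stack (lft \<Theta> \<phi> \<psi> z) (mat 1)
        = madj (Palpha \<alpha> z ** matrix_inv (\<Theta> z) ** stack (lft \<Theta> \<phi> \<psi> z) (mat 1)) ** ?H
          ** (Palpha \<alpha> z ** matrix_inv (\<Theta> z) ** stack (lft \<Theta> \<phi> \<psi> z) (mat 1))"
      by (simp add: madj_mult matrix_mul_assoc)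
    have "psd (madj (Palpha \<alpha> z ** matrix_inv (\<Theta> z) ** stack (lft \<Theta> \<phi> \<psi> z) (mat 1)) ** ?H
          ** (Palpha \<alpha> z ** matrix_inv (\<Theta> z) ** stack (lft \<Theta> \<phi> \<psi> z) (mat 1)))"
      by (rule psd_via[OF key2 ps2[OF z(1) zDp]])
    hence i2: "ineq2 \<alpha> \<Theta> (lft \<Theta> \<phi> \<psi>) z" unfolding ineq2_def e2 .
    show ?thesis using i1 i2 by blast
  qed
  show ?thesis
  proof (intro exI[of _ D] conjI D hT hphi hpsi hl)
    show "\<forall>z\<in>?U - D. det (\<Theta> z) \<noteq> 0 \<and> det (lft_den \<Theta> \<phi> \<psi> z) \<noteq> 0"
    proof
      fix z assume "z \<in> ?U - D"
      from PD[OF this] show "det (\<Theta> z) \<noteq> 0 \<and> det (lft_den \<Theta> \<phi> \<psi> z) \<noteq> 0"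
        unfolding P_def by blast
    qed
    show "\<forall>z. z \<notin> \<real> \<and> z \<notin> D \<longrightarrow> ineq1 \<Theta> (lft \<Theta> \<phi> \<psi>) z \<and> ineq2 \<alpha> \<Theta> (lft \<Theta> \<phi> \<psi>) z"
      using ineqs by blast
    show "\<forall>z\<in>?U - D. lft \<Theta> \<phi> \<psi> z = lft_num \<Theta> \<phi> \<psi> z ** matrix_inv (lft_den \<Theta> \<phi> \<psi> z)"
      by (simp add: lft_def)
  qed
qed




lemma matrix_add_rdistrib': "(A + B) ** C = A ** C + B ** C"
  by (vector matrix_matrix_mult_def sum.distrib[symmetric] field_simps)

lemma mholo_const: "mholo (\<lambda>z. C) S" by (simp add: mholo_def)

lemma mholo_mono: "mholo F S \<Longrightarrow> T \<subseteq> S \<Longrightarrow> mholo F T"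
  unfolding mholo_def using holomorphic_on_subset by blast

lemma open_diff_disc: "discrete_in D (dom_alpha \<alpha>) \<Longrightarrow> open (dom_alpha \<alpha> - D)"
  using open_dom_alpha by (intro open_diff_sparse_pts) (auto simp: discrete_in_def)

lemma ev_of_disc:
  assumes "discrete_in D (dom_alpha \<alpha>)" "\<forall>z\<in>dom_alpha \<alpha> - D. P z"
  shows "eventually P (cosparse (dom_alpha \<alpha>))"
proof -
  have "eventually (\<lambda>z. z \<notin> D \<and> z \<in> dom_alpha \<alpha>) (cosparse (dom_alpha \<alpha>))"
    using disc_ev[OF assms(1)] ev_in[OF open_dom_alpha] by (rule eventually_conj)
  thus ?thesis by eventually_elim (use assms(2) in auto)
qed

lemma pe_refl:
  assumes "stieltjes_pair \<alpha> \<phi> \<psi>"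
  shows "pair_equiv \<alpha> \<phi> \<psi> \<phi> \<psi>"
proof -
  from assms obtain D where D: "discrete_in D (dom_alpha \<alpha>)" and h: "mholo \<phi> (dom_alpha \<alpha> - D)" "mholo \<psi> (dom_alpha \<alpha> - D)"
    unfolding stieltjes_pair_def by blast
  show ?thesis unfolding pair_equiv_def
    by (intro exI[of _ "\<lambda>z. mat 1"] exI[of _ D] conjI mmero_const D h mholo_const ballI) simp_all
qed

lemma pe_sym:
  assumes "pair_equiv \<alpha> a b c d"
  shows "pair_equiv \<alpha> c d a b"
proof -
  let ?U = "dom_alpha \<alpha>"
  from assms obtain g D where mg: "mmero g ?U" and D: "discrete_in D ?U"
    and h: "mholo a (?U - D)" "mholo b (?U - D)" "mholo c (?U - D)" "mholo d (?U - D)" "mholo g (?U - D)"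
    and eq: "\<forall>z\<in>?U - D. det (g z) \<noteq> 0 \<and> c z = a z ** g z \<and> d z = b z ** g z"
    unfolding pair_equiv_def by blast
  have oU: "open (?U - D)" by (rule open_diff_disc[OF D])
  have mi: "mmero (\<lambda>z. matrix_inv (g z)) ?U"
    by (rule mmero_minv[OF mg ev_of_disc[OF D]]) (use eq in blast)
  have man_g: "man g (?U - D)" using h(5) mholo_iff[OF oU] by blast
  have hi: "mholo (\<lambda>z. matrix_inv (g z)) (?U - D)"
    unfolding mholo_iff[OF oU]
  proof (rule man_points, intro ballI)
    fix z assume z: "z \<in> ?U - D"
    show "man (\<lambda>z. matrix_inv (g z)) {z}"
      by (rule man_minv[OF man_point[OF man_g z]]) (use eq z in blast)
  qed
  have eq2: "det (matrix_inv (g z)) \<noteq> 0 \<and> a z = c z ** matrix_inv (g z) \<and> b z = d z ** matrix_inv (g z)"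
    if z: "z \<in> ?U - D" for z
  proof -
    have dg: "det (g z) \<noteq> 0" using eq z by blast
    have "c z ** matrix_inv (g z) = a z" using eq z by (simp add: matrix_mul_assoc[symmetric] minv(1)[OF dg])
    moreover have "d z ** matrix_inv (g z) = b z" using eq z by (simp add: matrix_mul_assoc[symmetric] minv(1)[OF dg])
    ultimately show ?thesis using det_minv[OF dg] by simp
  qed
  show ?thesis unfolding pair_equiv_def
    by (intro exI[of _ "\<lambda>z. matrix_inv (g z)"] exI[of _ D] conjI mi D h hi ballI eq2)
qed

lemma pe_trans:
  assumes "pair_equiv \<alpha> a b c d" "pair_equiv \<alpha> c d e f"
  shows "pair_equiv \<alpha> a b e f"
proof -
  let ?U = "dom_alpha \<alpha>"
  from assms(1) obtain g1 D1 where mg1: "mmero g1 ?U" and D1: "discrete_in D1 ?U"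
    and h1: "mholo a (?U - D1)" "mholo b (?U - D1)" "mholo g1 (?U - D1)"
    and eq1: "\<forall>z\<in>?U - D1. det (g1 z) \<noteq> 0 \<and> c z = a z ** g1 z \<and> d z = b z ** g1 z"
    unfolding pair_equiv_def by blast
  from assms(2) obtain g2 D2 where mg2: "mmero g2 ?U" and D2: "discrete_in D2 ?U"
    and h2: "mholo e (?U - D2)" "mholo f (?U - D2)" "mholo g2 (?U - D2)"
    and eq2: "\<forall>z\<in>?U - D2. det (g2 z) \<noteq> 0 \<and> e z = c z ** g2 z \<and> f z = d z ** g2 z"
    unfolding pair_equiv_def by blast
  have D: "discrete_in (D1 \<union> D2) ?U" using D1 D2 by (auto simp: discrete_in_def intro: sparse_in_union')
  have oU: "open (?U - (D1 \<union> D2))" by (rule open_diff_disc[OF D])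
  have sub1: "?U - (D1 \<union> D2) \<subseteq> ?U - D1" and sub2: "?U - (D1 \<union> D2) \<subseteq> ?U - D2" by auto
  have hg: "mholo (\<lambda>z. g1 z ** g2 z) (?U - (D1 \<union> D2))"
    unfolding mholo_iff[OF oU]
    using mholo_mono[OF h1(3) sub1] mholo_mono[OF h2(3) sub2] mholo_iff[OF oU] by (blast intro: man_mult)
  have eq: "det (g1 z ** g2 z) \<noteq> 0 \<and> e z = a z ** (g1 z ** g2 z) \<and> f z = b z ** (g1 z ** g2 z)"
    if z: "z \<in> ?U - (D1 \<union> D2)" for z
    using eq1 eq2 z by (auto simp: det_mul matrix_mul_assoc)
  show ?thesis unfolding pair_equiv_def
    by (intro exI[of _ "\<lambda>z. g1 z ** g2 z"] exI[of _ "D1 \<union> D2"] conjI mmero_mult mg1 mg2 D hg ballI eq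
        mholo_mono[OF h1(1) sub1] mholo_mono[OF h1(2) sub1] mholo_mono[OF h2(1) sub2] mholo_mono[OF h2(2) sub2])
qed

lemma class_eq:
  assumes "stieltjes_pair \<alpha> \<phi>1 \<psi>1" "stieltjes_pair \<alpha> \<phi>2 \<psi>2"
  shows "stieltjes_class \<alpha> \<phi>1 \<psi>1 = stieltjes_class \<alpha> \<phi>2 \<psi>2 \<longleftrightarrow> pair_equiv \<alpha> \<phi>1 \<psi>1 \<phi>2 \<psi>2"
proof
  assume h: "stieltjes_class \<alpha> \<phi>1 \<psi>1 = stieltjes_class \<alpha> \<phi>2 \<psi>2"
  have "(\<phi>2, \<psi>2) \<in> stieltjes_class \<alpha> \<phi>2 \<psi>2"
    using assms(2) pe_refl[OF assms(2)] by (simp add: stieltjes_class_def)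
  hence "(\<phi>2, \<psi>2) \<in> stieltjes_class \<alpha> \<phi>1 \<psi>1" using h by simp
  thus "pair_equiv \<alpha> \<phi>1 \<psi>1 \<phi>2 \<psi>2" by (simp add: stieltjes_class_def)
next
  assume e: "pair_equiv \<alpha> \<phi>1 \<psi>1 \<phi>2 \<psi>2"
  show "stieltjes_class \<alpha> \<phi>1 \<psi>1 = stieltjes_class \<alpha> \<phi>2 \<psi>2"
    unfolding stieltjes_class_def
    using pe_trans[OF e] pe_trans[OF pe_sym[OF e]] by blast
qed




lemma lft_equiv:
  fixes \<Theta> :: "complex \<Rightarrow> complex^('q::finite + 'q)^('q + 'q)"
  assumes PJ: "PJ \<alpha> \<Theta>" and p1: "stieltjes_pair \<alpha> \<phi>1 \<psi>1" and p2: "stieltjes_pair \<alpha> \<phi>2 \<psi>2"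
    and nv1: "\<not> vanishes_identically (dom_alpha \<alpha>) (\<lambda>z. det (lft_den \<Theta> \<phi>1 \<psi>1 z))"
    and nv2: "\<not> vanishes_identically (dom_alpha \<alpha>) (\<lambda>z. det (lft_den \<Theta> \<phi>2 \<psi>2 z))"
  shows "mero_eq (dom_alpha \<alpha>) (lft \<Theta> \<phi>1 \<psi>1) (lft \<Theta> \<phi>2 \<psi>2) \<longleftrightarrow> pair_equiv \<alpha> \<phi>1 \<psi>1 \<phi>2 \<psi>2"
proof -
  let ?U = "dom_alpha \<alpha>"
  have mT: "mmero \<Theta> ?U" using PJ_mero[OF PJ] .
  have m1: "mmero \<phi>1 ?U" "mmero \<psi>1 ?U" and m2: "mmero \<phi>2 ?U" "mmero \<psi>2 ?U"
    using p1 p2 unfolding stieltjes_pair_def by blast+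
  have mden1: "mmero (lft_den \<Theta> \<phi>1 \<psi>1) ?U" and mden2: "mmero (lft_den \<Theta> \<phi>2 \<psi>2) ?U"
    using mmero_lft_parts(2) mT m1 m2 by blast+
  have ev1: "eventually (\<lambda>z. det (lft_den \<Theta> \<phi>1 \<psi>1 z) \<noteq> 0) (cosparse ?U)"
    by (rule nonvanish_ev[OF mero_det[OF mden1] open_dom_alpha connected_dom_alpha nv1])
  have ev2: "eventually (\<lambda>z. det (lft_den \<Theta> \<phi>2 \<psi>2 z) \<noteq> 0) (cosparse ?U)"
    by (rule nonvanish_ev[OF mero_det[OF mden2] open_dom_alpha connected_dom_alpha nv2])
  show ?thesis
  proof
    assume "mero_eq ?U (lft \<Theta> \<phi>1 \<psi>1) (lft \<Theta> \<phi>2 \<psi>2)"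
    hence evl: "eventually (\<lambda>z. lft \<Theta> \<phi>1 \<psi>1 z = lft \<Theta> \<phi>2 \<psi>2 z) (cosparse ?U)"
      using mero_eq_iff[OF open_dom_alpha] by auto
    define Q where "Q z \<longleftrightarrow> z \<in> ?U \<and> lft \<Theta> \<phi>1 \<psi>1 z = lft \<Theta> \<phi>2 \<psi>2 z \<and> det (\<Theta> z) \<noteq> 0 \<and>
       det (lft_den \<Theta> \<phi>1 \<psi>1 z) \<noteq> 0 \<and> det (lft_den \<Theta> \<phi>2 \<psi>2 z) \<noteq> 0 \<and>
       man \<Theta> {z} \<and> man \<phi>1 {z} \<and> man \<psi>1 {z} \<and> man \<phi>2 {z} \<and> man \<psi>2 {z}" for z
    have evQ: "eventually Q (cosparse ?U)"
      using ev_in[OF open_dom_alpha] evl part_a(1)[OF PJ] ev1 ev2 ev_man[OF mT]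
        ev_man[OF m1(1)] ev_man[OF m1(2)] ev_man[OF m2(1)] ev_man[OF m2(2)]
      unfolding Q_def by (intro eventually_conj) auto
    define D where "D = {z\<in>?U. \<not> Q z}"
    have D: "discrete_in D ?U" unfolding D_def by (rule ev_disc[OF evQ])
    have QD: "Q z" if "z \<in> ?U - D" for z using that by (auto simp: D_def)
    have oU: "open (?U - D)" by (rule open_diff_disc[OF D])
    have mz: "man \<phi>1 {z}" "man \<psi>1 {z}" "man \<phi>2 {z}" "man \<psi>2 {z}" "man \<Theta> {z}" if "z \<in> ?U - D" for z
      using QD[OF that] unfolding Q_def by auto
    have h1: "mholo \<phi>1 (?U - D)" unfolding mholo_iff[OF oU] by (rule man_points) (use mz(1) in blast)
    have h2: "mholo \<psi>1 (?U - D)" unfolding mholo_iff[OF oU] by (rule man_points) (use mz(2) in blast)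
    have h3: "mholo \<phi>2 (?U - D)" unfolding mholo_iff[OF oU] by (rule man_points) (use mz(3) in blast)
    have h4: "mholo \<psi>2 (?U - D)" unfolding mholo_iff[OF oU] by (rule man_points) (use mz(4) in blast)
    define g where "g z = matrix_inv (lft_den \<Theta> \<phi>1 \<psi>1 z) ** lft_den \<Theta> \<phi>2 \<psi>2 z" for z
    have mg: "mmero g ?U" unfolding g_def by (intro mmero_mult mmero_minv mden1 ev1 mden2)
    have hg: "mholo g (?U - D)" unfolding mholo_iff[OF oU]
    proof (rule man_points, intro ballI)
      fix z assume z: "z \<in> ?U - D"
      have d1: "det (lft_den \<Theta> \<phi>1 \<psi>1 z) \<noteq> 0" using QD[OF z] unfolding Q_def by blast
      show "man g {z}" unfolding g_def
        by (intro man_mult man_minv man_lft_parts(2) mz[OF z] d1)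
    qed
    have eqs: "det (g z) \<noteq> 0 \<and> \<phi>2 z = \<phi>1 z ** g z \<and> \<psi>2 z = \<psi>1 z ** g z" if z: "z \<in> ?U - D" for z
    proof -
      have Qz: "Q z" by (rule QD[OF z])
      hence dT: "det (\<Theta> z) \<noteq> 0" and d1: "det (lft_den \<Theta> \<phi>1 \<psi>1 z) \<noteq> 0"
        and d2: "det (lft_den \<Theta> \<phi>2 \<psi>2 z) \<noteq> 0" and le: "lft \<Theta> \<phi>1 \<psi>1 z = lft \<Theta> \<phi>2 \<psi>2 z"
        unfolding Q_def by blast+
      have k1: "matrix_inv (\<Theta> z) ** stack (lft \<Theta> \<phi>1 \<psi>1 z) (mat 1) = stack (\<phi>1 z) (\<psi>1 z) ** matrix_inv (lft_den \<Theta> \<phi>1 \<psi>1 z)"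
        using key_identity[of "\<Theta> z" "\<phi>1 z" "\<psi>1 z"] dT d1 by (simp add: lft_def lft_num_def lft_den_def)
      have k2: "matrix_inv (\<Theta> z) ** stack (lft \<Theta> \<phi>2 \<psi>2 z) (mat 1) = stack (\<phi>2 z) (\<psi>2 z) ** matrix_inv (lft_den \<Theta> \<phi>2 \<psi>2 z)"
        using key_identity[of "\<Theta> z" "\<phi>2 z" "\<psi>2 z"] dT d2 by (simp add: lft_def lft_num_def lft_den_def)
      have "stack (\<phi>2 z) (\<psi>2 z) = stack (\<phi>2 z) (\<psi>2 z) ** matrix_inv (lft_den \<Theta> \<phi>2 \<psi>2 z) ** lft_den \<Theta> \<phi>2 \<psi>2 z"
        by (simp add: matrix_mul_assoc[symmetric] minv(2)[OF d2])
      also have "\<dots> = stack (\<phi>1 z) (\<psi>1 z) ** matrix_inv (lft_den \<Theta> \<phi>1 \<psi>1 z) ** lft_den \<Theta> \<phi>2 \<psi>2 z"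
        using k1 k2 le by simp
      also have "\<dots> = stack (\<phi>1 z ** g z) (\<psi>1 z ** g z)"
        by (simp add: g_def matrix_mul_assoc[symmetric] stack_mult)
      finally have "\<phi>2 z = \<phi>1 z ** g z \<and> \<psi>2 z = \<psi>1 z ** g z" by (rule stack_inj)
      moreover have "det (g z) \<noteq> 0" using det_minv[OF d1] d2 by (simp add: g_def det_mul)
      ultimately show ?thesis by blast
    qed
    show "pair_equiv \<alpha> \<phi>1 \<psi>1 \<phi>2 \<psi>2" unfolding pair_equiv_def
      by (intro exI[of _ g] exI[of _ D] conjI mg D h1 h2 h3 h4 hg ballI eqs)
  next
    assume "pair_equiv \<alpha> \<phi>1 \<psi>1 \<phi>2 \<psi>2"
    then obtain g D where D: "discrete_in D ?U"
      and eq: "\<forall>z\<in>?U - D. det (g z) \<noteq> 0 \<and> \<phi>2 z = \<phi>1 z ** g z \<and> \<psi>2 z = \<psi>1 z ** g z"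
      unfolding pair_equiv_def by blast
    have "eventually (\<lambda>z. det (g z) \<noteq> 0 \<and> \<phi>2 z = \<phi>1 z ** g z \<and> \<psi>2 z = \<psi>1 z ** g z) (cosparse ?U)"
      by (rule ev_of_disc[OF D eq])
    hence "eventually (\<lambda>z. lft \<Theta> \<phi>1 \<psi>1 z = lft \<Theta> \<phi>2 \<psi>2 z) (cosparse ?U)"
      using ev1
    proof eventually_elim
      case (elim z)
      hence dg: "det (g z) \<noteq> 0" and d1: "det (lft_den \<Theta> \<phi>1 \<psi>1 z) \<noteq> 0"
        and e1: "\<phi>2 z = \<phi>1 z ** g z" and e2: "\<psi>2 z = \<psi>1 z ** g z" by blast+
      have n: "lft_num \<Theta> \<phi>2 \<psi>2 z = lft_num \<Theta> \<phi>1 \<psi>1 z ** g z"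
        by (simp add: lft_num_def e1 e2 matrix_mul_assoc matrix_add_rdistrib')
      have d: "lft_den \<Theta> \<phi>2 \<psi>2 z = lft_den \<Theta> \<phi>1 \<psi>1 z ** g z"
        by (simp add: lft_den_def e1 e2 matrix_mul_assoc matrix_add_rdistrib')
      have "lft \<Theta> \<phi>2 \<psi>2 z = lft_num \<Theta> \<phi>1 \<psi>1 z ** g z ** (matrix_inv (g z) ** matrix_inv (lft_den \<Theta> \<phi>1 \<psi>1 z))"
        by (simp add: lft_def n d minv_mult[OF d1 dg])
      also have "\<dots> = lft \<Theta> \<phi>1 \<psi>1 z"
        by (simp add: lft_def matrix_mul_assoc[symmetric] minv(1)[OF dg])
           (simp add: matrix_mul_assoc minv(1)[OF dg])
      finally show ?case by simp
    qed
    thus "mero_eq ?U (lft \<Theta> \<phi>1 \<psi>1) (lft \<Theta> \<phi>2 \<psi>2)" using mero_eq_iff[OF open_dom_alpha] by auto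
  qed
qed




theorem proposition10p16:
  fixes \<alpha> :: real and \<Theta> :: "complex \<Rightarrow> complex^('q::finite + 'q)^('q + 'q)"
  assumes "PJ' \<alpha> \<Theta>"
  shows
  \<comment> \<open>(a)\<close>
  "(\<not> vanishes_identically (dom_alpha \<alpha>) (\<lambda>z. det (\<Theta> z)) \<and>
    mmero (\<lambda>z. matrix_inv (\<Theta> z)) (dom_alpha \<alpha>))
  \<comment> \<open>(b)\<close>
  \<and> (\<forall>f :: complex \<Rightarrow> complex^'q^'q. mmero f (dom_alpha \<alpha>) \<longrightarrow>
      (\<forall>D. discrete_in D (dom_alpha \<alpha>) \<and> mholo f (dom_alpha \<alpha> - D) \<and> mholo \<Theta> (dom_alpha \<alpha> - D) \<and>
           (\<forall>z\<in>dom_alpha \<alpha> - D. det (\<Theta> z) \<noteq> 0) \<and>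
           (\<forall>z. z \<notin> \<real> \<and> z \<notin> D \<longrightarrow> ineq1 \<Theta> f z \<and> ineq2 \<alpha> \<Theta> f z) \<longrightarrow>
         (\<exists>\<phi> \<psi>. stieltjes_pair \<alpha> \<phi> \<psi> \<and> mholo \<phi> (dom_alpha \<alpha> - D) \<and> mholo \<psi> (dom_alpha \<alpha> - D) \<and>
            (\<forall>z\<in>dom_alpha \<alpha> - D. det (lft_den \<Theta> \<phi> \<psi> z) \<noteq> 0 \<and>
               f z = lft_num \<Theta> \<phi> \<psi> z ** matrix_inv (lft_den \<Theta> \<phi> \<psi> z)))))
  \<comment> \<open>(c)\<close>
  \<and> (\<forall>\<phi> \<psi>. stieltjes_pair \<alpha> \<phi> \<psi> \<and>
        \<not> vanishes_identically (dom_alpha \<alpha>) (\<lambda>z. det (lft_den \<Theta> \<phi> \<psi> z)) \<longrightarrow>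
      (\<exists>D. discrete_in D (dom_alpha \<alpha>) \<and>
         mholo \<Theta> (dom_alpha \<alpha> - D) \<and> mholo \<phi> (dom_alpha \<alpha> - D) \<and> mholo \<psi> (dom_alpha \<alpha> - D) \<and>
         (\<forall>z\<in>dom_alpha \<alpha> - D. det (\<Theta> z) \<noteq> 0 \<and> det (lft_den \<Theta> \<phi> \<psi> z) \<noteq> 0) \<and>
         mholo (lft \<Theta> \<phi> \<psi>) (dom_alpha \<alpha> - D) \<and>
         (\<forall>z. z \<notin> \<real> \<and> z \<notin> D \<longrightarrow> ineq1 \<Theta> (lft \<Theta> \<phi> \<psi>) z \<and> ineq2 \<alpha> \<Theta> (lft \<Theta> \<phi> \<psi>) z) \<and>
         (\<forall>z\<in>dom_alpha \<alpha> - D.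
            lft \<Theta> \<phi> \<psi> z = lft_num \<Theta> \<phi> \<psi> z ** matrix_inv (lft_den \<Theta> \<phi> \<psi> z))))
  \<comment> \<open>(d)\<close>
  \<and> (\<forall>\<phi>1 \<psi>1 \<phi>2 \<psi>2. stieltjes_pair \<alpha> \<phi>1 \<psi>1 \<and> stieltjes_pair \<alpha> \<phi>2 \<psi>2 \<and>
        \<not> vanishes_identically (dom_alpha \<alpha>) (\<lambda>z. det (lft_den \<Theta> \<phi>1 \<psi>1 z)) \<and>
        \<not> vanishes_identically (dom_alpha \<alpha>) (\<lambda>z. det (lft_den \<Theta> \<phi>2 \<psi>2 z)) \<longrightarrow>
      (stieltjes_class \<alpha> \<phi>1 \<psi>1 = stieltjes_class \<alpha> \<phi>2 \<psi>2 \<longleftrightarrow>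
       mero_eq (dom_alpha \<alpha>) (lft \<Theta> \<phi>1 \<psi>1) (lft \<Theta> \<phi>2 \<psi>2)))"
proof -
  have PJ: "PJ \<alpha> \<Theta>" using assms unfolding PJ'_def by blast
  have A: "\<not> vanishes_identically (dom_alpha \<alpha>) (\<lambda>z. det (\<Theta> z)) \<and>
    mmero (\<lambda>z. matrix_inv (\<Theta> z)) (dom_alpha \<alpha>)"
    using part_a(2,3)[OF PJ] by blast
  have B: "\<forall>f :: complex \<Rightarrow> complex^'q^'q. mmero f (dom_alpha \<alpha>) \<longrightarrow>
      (\<forall>D. discrete_in D (dom_alpha \<alpha>) \<and> mholo f (dom_alpha \<alpha> - D) \<and> mholo \<Theta> (dom_alpha \<alpha> - D) \<and>
           (\<forall>z\<in>dom_alpha \<alpha> - D. det (\<Theta> z) \<noteq> 0) \<and>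
           (\<forall>z. z \<notin> \<real> \<and> z \<notin> D \<longrightarrow> ineq1 \<Theta> f z \<and> ineq2 \<alpha> \<Theta> f z) \<longrightarrow>
         (\<exists>\<phi> \<psi>. stieltjes_pair \<alpha> \<phi> \<psi> \<and> mholo \<phi> (dom_alpha \<alpha> - D) \<and> mholo \<psi> (dom_alpha \<alpha> - D) \<and>
            (\<forall>z\<in>dom_alpha \<alpha> - D. det (lft_den \<Theta> \<phi> \<psi> z) \<noteq> 0 \<and>
               f z = lft_num \<Theta> \<phi> \<psi> z ** matrix_inv (lft_den \<Theta> \<phi> \<psi> z))))"
  proof (intro allI impI)
    fix f :: "complex \<Rightarrow> complex^'q^'q" and D
    assume mf: "mmero f (dom_alpha \<alpha>)"
      and h: "discrete_in D (dom_alpha \<alpha>) \<and> mholo f (dom_alpha \<alpha> - D) \<and> mholo \<Theta> (dom_alpha \<alpha> - D) \<and>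
           (\<forall>z\<in>dom_alpha \<alpha> - D. det (\<Theta> z) \<noteq> 0) \<and>
           (\<forall>z. z \<notin> \<real> \<and> z \<notin> D \<longrightarrow> ineq1 \<Theta> f z \<and> ineq2 \<alpha> \<Theta> f z)"
    show "\<exists>\<phi> \<psi>. stieltjes_pair \<alpha> \<phi> \<psi> \<and> mholo \<phi> (dom_alpha \<alpha> - D) \<and> mholo \<psi> (dom_alpha \<alpha> - D) \<and>
            (\<forall>z\<in>dom_alpha \<alpha> - D. det (lft_den \<Theta> \<phi> \<psi> z) \<noteq> 0 \<and>
               f z = lft_num \<Theta> \<phi> \<psi> z ** matrix_inv (lft_den \<Theta> \<phi> \<psi> z))"
      using part_b[OF PJ mf] h by blast
  qed
  have C: "\<forall>\<phi> \<psi>. stieltjes_pair \<alpha> \<phi> \<psi> \<and>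
        \<not> vanishes_identically (dom_alpha \<alpha>) (\<lambda>z. det (lft_den \<Theta> \<phi> \<psi> z)) \<longrightarrow>
      (\<exists>D. discrete_in D (dom_alpha \<alpha>) \<and>
         mholo \<Theta> (dom_alpha \<alpha> - D) \<and> mholo \<phi> (dom_alpha \<alpha> - D) \<and> mholo \<psi> (dom_alpha \<alpha> - D) \<and>
         (\<forall>z\<in>dom_alpha \<alpha> - D. det (\<Theta> z) \<noteq> 0 \<and> det (lft_den \<Theta> \<phi> \<psi> z) \<noteq> 0) \<and>
         mholo (lft \<Theta> \<phi> \<psi>) (dom_alpha \<alpha> - D) \<and>
         (\<forall>z. z \<notin> \<real> \<and> z \<notin> D \<longrightarrow> ineq1 \<Theta> (lft \<Theta> \<phi> \<psi>) z \<and> ineq2 \<alpha> \<Theta> (lft \<Theta> \<phi> \<psi>) z) \<and>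
         (\<forall>z\<in>dom_alpha \<alpha> - D.
            lft \<Theta> \<phi> \<psi> z = lft_num \<Theta> \<phi> \<psi> z ** matrix_inv (lft_den \<Theta> \<phi> \<psi> z)))"
  proof (intro allI impI)
    fix \<phi> \<psi> :: "complex \<Rightarrow> complex^'q^'q"
    assume h: "stieltjes_pair \<alpha> \<phi> \<psi> \<and> \<not> vanishes_identically (dom_alpha \<alpha>) (\<lambda>z. det (lft_den \<Theta> \<phi> \<psi> z))"
    show "\<exists>D. discrete_in D (dom_alpha \<alpha>) \<and>
         mholo \<Theta> (dom_alpha \<alpha> - D) \<and> mholo \<phi> (dom_alpha \<alpha> - D) \<and> mholo \<psi> (dom_alpha \<alpha> - D) \<and>
         (\<forall>z\<in>dom_alpha \<alpha> - D. det (\<Theta> z) \<noteq> 0 \<and> det (lft_den \<Theta> \<phi> \<psi> z) \<noteq> 0) \<and>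
         mholo (lft \<Theta> \<phi> \<psi>) (dom_alpha \<alpha> - D) \<and>
         (\<forall>z. z \<notin> \<real> \<and> z \<notin> D \<longrightarrow> ineq1 \<Theta> (lft \<Theta> \<phi> \<psi>) z \<and> ineq2 \<alpha> \<Theta> (lft \<Theta> \<phi> \<psi>) z) \<and>
         (\<forall>z\<in>dom_alpha \<alpha> - D.
            lft \<Theta> \<phi> \<psi> z = lft_num \<Theta> \<phi> \<psi> z ** matrix_inv (lft_den \<Theta> \<phi> \<psi> z))"
      using part_c[OF PJ] h by blast
  qed
  have Dd: "\<forall>\<phi>1 \<psi>1 \<phi>2 \<psi>2. stieltjes_pair \<alpha> \<phi>1 \<psi>1 \<and> stieltjes_pair \<alpha> \<phi>2 \<psi>2 \<and>
        \<not> vanishes_identically (dom_alpha \<alpha>) (\<lambda>z. det (lft_den \<Theta> \<phi>1 \<psi>1 z)) \<and>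
        \<not> vanishes_identically (dom_alpha \<alpha>) (\<lambda>z. det (lft_den \<Theta> \<phi>2 \<psi>2 z)) \<longrightarrow>
      (stieltjes_class \<alpha> \<phi>1 \<psi>1 = stieltjes_class \<alpha> \<phi>2 \<psi>2 \<longleftrightarrow>
       mero_eq (dom_alpha \<alpha>) (lft \<Theta> \<phi>1 \<psi>1) (lft \<Theta> \<phi>2 \<psi>2))"
  proof (intro allI impI)
    fix \<phi>1 \<psi>1 \<phi>2 \<psi>2 :: "complex \<Rightarrow> complex^'q^'q"
    assume h: "stieltjes_pair \<alpha> \<phi>1 \<psi>1 \<and> stieltjes_pair \<alpha> \<phi>2 \<psi>2 \<and>
        \<not> vanishes_identically (dom_alpha \<alpha>) (\<lambda>z. det (lft_den \<Theta> \<phi>1 \<psi>1 z)) \<and>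
        \<not> vanishes_identically (dom_alpha \<alpha>) (\<lambda>z. det (lft_den \<Theta> \<phi>2 \<psi>2 z))"
    hence p1: "stieltjes_pair \<alpha> \<phi>1 \<psi>1" and p2: "stieltjes_pair \<alpha> \<phi>2 \<psi>2"
      and n1: "\<not> vanishes_identically (dom_alpha \<alpha>) (\<lambda>z. det (lft_den \<Theta> \<phi>1 \<psi>1 z))"
      and n2: "\<not> vanishes_identically (dom_alpha \<alpha>) (\<lambda>z. det (lft_den \<Theta> \<phi>2 \<psi>2 z))" by blast+
    show "stieltjes_class \<alpha> \<phi>1 \<psi>1 = stieltjes_class \<alpha> \<phi>2 \<psi>2 \<longleftrightarrow>
       mero_eq (dom_alpha \<alpha>) (lft \<Theta> \<phi>1 \<psi>1) (lft \<Theta> \<phi>2 \<psi>2)"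
      using class_eq[OF p1 p2] lft_equiv[OF PJ p1 p2 n1 n2] by blast
  qed
  show ?thesis using A B C Dd by blast
qed


end
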